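(* Let $(\mathcal M,X,\bot)$ be a non trivial irreducible concurrent system with characteristic root $r$. Then the digraph $\mathrm{ADSC}^+$ has spectral radius $r^{-1}$, equal to the spectral radius of $\mathrm{ADSC}$.
   Context: A trace monoid $\mathcal M=\mathcal M(\Sigma,I)$ is $\langle\Sigma\mid ab=ba\ ((a,b)\in I)\rangle$, $\Sigma$ finite, $I$ irreflexive symmetric; $|x|$ is length, $\varepsilon$ the unit, $D=(\Sigma\times\Sigma)\setminus I$; $\mathcal M$ is irreducible if $(\Sigma,D)$ is connected. A clique is a trace of pairwise distinct letters pairwise in $I$; $\mathfrak C$ is the set of nonempty cliques; for $c,c'\in\mathfrak C$, $c\to c'$ means every letter of $c'$ is $D$-related to some letter of $c$. Each nonempty trace $x$ has a unique normal form $c_1\cdots c_h$, $c_i\in\mathfrak C$, $c_i\to c_{i+1}$; $C_1(x)=c_1$. A concurrent system $(\mathcal M,X,\bot)$: $X$ finite, $\bot\notin X$, right action of $\mathcal M$ on $X\cup\{\bot\}$ with $\bot\cdot x=\bot$; $\mathcal M_\alpha=\{x:\alpha\cdot x\ne\bot\}$, $\mathfrak C_\alpha=\mathfrak C\cap\mathcal M_\alpha$. Non trivial: there exist $\alpha\in X$ and a letter $a$ with $\alpha\cdot a\neq\bot$. Irreducible: accessible (any state reaches any state), alive (for all $\alpha$ and letters $a$ some $x$ containing $a$ with $\alpha\cdot x\ne\bot$), and $\mathcal M$ irreducible. Characteristic root: $r=\min_{\alpha,\beta}$ of the radius of convergence of $\sum_n\#\{x:|x|=n,\alpha\cdot x=\beta\}z^n$.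 DSC: nodes $(\alpha,c)$, $c\in\mathfrak C_\alpha$, arc $(\alpha,c)\to(\beta,d)$ iff $\beta=\alpha\cdot c$ and $c\to d$. ADSC: nodes $(\alpha,c,i)$ with $(\alpha,c)$ a DSC node and $1\le i\le|c|$; arcs $(\alpha,c,i)\to(\alpha,c,i+1)$, and $(\alpha,c,|c|)\to(\beta,d,1)$ whenever $(\alpha,c)\to(\beta,d)$ in DSC. A DSC node $(\alpha,c)$ is positive if some $x\in\mathcal M_\alpha$ satisfies $C_1(xy)=c$ for all $y\in\mathcal M_{\alpha\cdot x}$; $(\alpha,c,i)$ is positive iff $(\alpha,c)$ is. $\mathrm{ADSC}^+$ is the subdigraph induced by positive nodes. The spectral radius of a digraph is that of its adjacency matrix. *)

theory Defs
  imports "HOL-Analysis.Summation_Tests" "Jordan_Normal_Form.Spectral_Radius"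
begin

text \<open>Traces over the alphabet Sig with independence relation I are represented by
  words (lists over Sig) modulo the congruence generated by swapping adjacent
  independent letters.\<close>

definition trace_monoid :: "'a set \<Rightarrow> ('a \<times> 'a) set \<Rightarrow> bool" where
  "trace_monoid Sig I \<longleftrightarrow> finite Sig \<and> I \<subseteq> Sig \<times> Sig \<and> irrefl I \<and> sym I"

definition words :: "'a set \<Rightarrow> 'a list set" where
  "words Sig = {w. set w \<subseteq> Sig}"

inductive swap_step :: "('a \<times> 'a) set \<Rightarrow> 'a list \<Rightarrow> 'a list \<Rightarrow> bool" for I where
  "(a, b) \<in> I \<Longrightarrow> swap_step I (u @ [a, b] @ v) (u @ [b, a] @ v)"

definition trace_eq :: "('a \<times> 'a) set \<Rightarrow> 'a list \<Rightarrow> 'a list \<Rightarrow> bool" where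
  "trace_eq I = (swap_step I)\<^sup>*\<^sup>*"

definition dep :: "'a set \<Rightarrow> ('a \<times> 'a) set \<Rightarrow> ('a \<times> 'a) set" where
  "dep Sig I = (Sig \<times> Sig) - I"

definition irreducible_monoid :: "'a set \<Rightarrow> ('a \<times> 'a) set \<Rightarrow> bool" where
  "irreducible_monoid Sig I \<longleftrightarrow> Sig \<noteq> {} \<and> (\<forall>a\<in>Sig. \<forall>b\<in>Sig. (a, b) \<in> (dep Sig I)\<^sup>*)"

text \<open>A clique (trace of pairwise distinct, pairwise independent letters) is determined by
  its set of letters; nonempty cliques are represented by nonempty such sets.\<close>
definition cliques :: "'a set \<Rightarrow> ('a \<times> 'a) set \<Rightarrow> 'a set set" where
  "cliques Sig I = {c. c \<noteq> {} \<and> c \<subseteq> Sig \<and> (\<forall>a\<in>c. \<forall>b\<in>c. a \<noteq> b \<longrightarrow> (a, b) \<in> I)}"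

definition clique_word :: "'a set \<Rightarrow> 'a list" where
  "clique_word c = (SOME w. distinct w \<and> set w = c)"

definition clique_arrow :: "'a set \<Rightarrow> ('a \<times> 'a) set \<Rightarrow> 'a set \<Rightarrow> 'a set \<Rightarrow> bool" where
  "clique_arrow Sig I c c' \<longleftrightarrow> (\<forall>b\<in>c'. \<exists>a\<in>c. (a, b) \<in> dep Sig I)"

definition is_normal_form :: "'a set \<Rightarrow> ('a \<times> 'a) set \<Rightarrow> 'a set list \<Rightarrow> 'a list \<Rightarrow> bool" where
  "is_normal_form Sig I cs w \<longleftrightarrow>
     set cs \<subseteq> cliques Sig I \<and>
     (\<forall>i. Suc i < length cs \<longrightarrow> clique_arrow Sig I (cs ! i) (cs ! Suc i)) \<and>
     trace_eq I (concat (map clique_word cs)) w"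

definition first_clique_is :: "'a set \<Rightarrow> ('a \<times> 'a) set \<Rightarrow> 'a list \<Rightarrow> 'a set \<Rightarrow> bool" where
  "first_clique_is Sig I w c \<longleftrightarrow> (\<exists>cs. is_normal_form Sig I cs w \<and> cs \<noteq> [] \<and> hd cs = c)"

text \<open>States are the elements of X; the sink state \<bottom> is represented by None.
  The right action of the trace monoid is given by its action on letters, delta;
  it induces an action of the monoid exactly when independent letters commute.\<close>

fun run :: "('x \<Rightarrow> 'a \<Rightarrow> 'x option) \<Rightarrow> 'x option \<Rightarrow> 'a list \<Rightarrow> 'x option" where
  "run delta s [] = s"
| "run delta s (a # w) = (case s of None \<Rightarrow> None | Some \<alpha> \<Rightarrow> run delta (delta \<alpha> a) w)"

definition concurrent_system ::
  "'a set \<Rightarrow> ('a \<times> 'a) set \<Rightarrow> 'x set \<Rightarrow> ('x \<Rightarrow> 'a \<Rightarrow> 'x option) \<Rightarrow> bool" where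
  "concurrent_system Sig I X delta \<longleftrightarrow>
     trace_monoid Sig I \<and> finite X \<and>
     (\<forall>\<alpha>\<in>X. \<forall>a\<in>Sig. delta \<alpha> a = None \<or> (\<exists>\<beta>\<in>X. delta \<alpha> a = Some \<beta>)) \<and>
     (\<forall>\<alpha>\<in>X. \<forall>(a, b)\<in>I. run delta (Some \<alpha>) [a, b] = run delta (Some \<alpha>) [b, a])"

definition M_at :: "'a set \<Rightarrow> ('x \<Rightarrow> 'a \<Rightarrow> 'x option) \<Rightarrow> 'x \<Rightarrow> 'a list set" where
  "M_at Sig delta \<alpha> = {w \<in> words Sig. run delta (Some \<alpha>) w \<noteq> None}"

definition non_trivial :: "'a set \<Rightarrow> 'x set \<Rightarrow> ('x \<Rightarrow> 'a \<Rightarrow> 'x option) \<Rightarrow> bool" where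
  "non_trivial Sig X delta \<longleftrightarrow> (\<exists>\<alpha>\<in>X. \<exists>a\<in>Sig. delta \<alpha> a \<noteq> None)"

definition accessible :: "'a set \<Rightarrow> 'x set \<Rightarrow> ('x \<Rightarrow> 'a \<Rightarrow> 'x option) \<Rightarrow> bool" where
  "accessible Sig X delta \<longleftrightarrow>
     (\<forall>\<alpha>\<in>X. \<forall>\<beta>\<in>X. \<exists>w\<in>words Sig. run delta (Some \<alpha>) w = Some \<beta>)"

definition alive :: "'a set \<Rightarrow> 'x set \<Rightarrow> ('x \<Rightarrow> 'a \<Rightarrow> 'x option) \<Rightarrow> bool" where
  "alive Sig X delta \<longleftrightarrow>
     (\<forall>\<alpha>\<in>X. \<forall>a\<in>Sig. \<exists>w\<in>words Sig. a \<in> set w \<and> run delta (Some \<alpha>) w \<noteq> None)"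

definition irreducible_system ::
  "'a set \<Rightarrow> ('a \<times> 'a) set \<Rightarrow> 'x set \<Rightarrow> ('x \<Rightarrow> 'a \<Rightarrow> 'x option) \<Rightarrow> bool" where
  "irreducible_system Sig I X delta \<longleftrightarrow>
     accessible Sig X delta \<and> alive Sig X delta \<and> irreducible_monoid Sig I"

definition count_traces ::
  "'a set \<Rightarrow> ('a \<times> 'a) set \<Rightarrow> ('x \<Rightarrow> 'a \<Rightarrow> 'x option) \<Rightarrow> 'x \<Rightarrow> 'x \<Rightarrow> nat \<Rightarrow> nat" where
  "count_traces Sig I delta \<alpha> \<beta> n =
     card ((\<lambda>w. {v. trace_eq I w v})
            ` {w \<in> words Sig. length w = n \<and> run delta (Some \<alpha>) w = Some \<beta>})"

definition char_root ::
  "'a set \<Rightarrow> ('a \<times> 'a) set \<Rightarrow> 'x set \<Rightarrow> ('x \<Rightarrow> 'a \<Rightarrow> 'x option) \<Rightarrow> ereal" where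
  "char_root Sig I X delta =
     Min ((\<lambda>(\<alpha>, \<beta>). conv_radius (\<lambda>n. real (count_traces Sig I delta \<alpha> \<beta> n))) ` (X \<times> X))"

definition act_clique :: "('x \<Rightarrow> 'a \<Rightarrow> 'x option) \<Rightarrow> 'x \<Rightarrow> 'a set \<Rightarrow> 'x option" where
  "act_clique delta \<alpha> c = run delta (Some \<alpha>) (clique_word c)"

definition DSC_nodes ::
  "'a set \<Rightarrow> ('a \<times> 'a) set \<Rightarrow> 'x set \<Rightarrow> ('x \<Rightarrow> 'a \<Rightarrow> 'x option) \<Rightarrow> ('x \<times> 'a set) set" where
  "DSC_nodes Sig I X delta =
     {(\<alpha>, c). \<alpha> \<in> X \<and> c \<in> cliques Sig I \<and> act_clique delta \<alpha> c \<noteq> None}"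

definition DSC_arc ::
  "'a set \<Rightarrow> ('a \<times> 'a) set \<Rightarrow> 'x set \<Rightarrow> ('x \<Rightarrow> 'a \<Rightarrow> 'x option)
     \<Rightarrow> 'x \<times> 'a set \<Rightarrow> 'x \<times> 'a set \<Rightarrow> bool" where
  "DSC_arc Sig I X delta u v \<longleftrightarrow>
     u \<in> DSC_nodes Sig I X delta \<and> v \<in> DSC_nodes Sig I X delta \<and>
     act_clique delta (fst u) (snd u) = Some (fst v) \<and> clique_arrow Sig I (snd u) (snd v)"

definition ADSC_nodes ::
  "'a set \<Rightarrow> ('a \<times> 'a) set \<Rightarrow> 'x set \<Rightarrow> ('x \<Rightarrow> 'a \<Rightarrow> 'x option) \<Rightarrow> ('x \<times> 'a set \<times> nat) set" where
  "ADSC_nodes Sig I X delta =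
     {(\<alpha>, c, i). (\<alpha>, c) \<in> DSC_nodes Sig I X delta \<and> 1 \<le> i \<and> i \<le> card c}"

definition ADSC_arc ::
  "'a set \<Rightarrow> ('a \<times> 'a) set \<Rightarrow> 'x set \<Rightarrow> ('x \<Rightarrow> 'a \<Rightarrow> 'x option)
     \<Rightarrow> 'x \<times> 'a set \<times> nat \<Rightarrow> 'x \<times> 'a set \<times> nat \<Rightarrow> bool" where
  "ADSC_arc Sig I X delta u v \<longleftrightarrow>
     u \<in> ADSC_nodes Sig I X delta \<and> v \<in> ADSC_nodes Sig I X delta \<and>
     (case (u, v) of ((\<alpha>, c, i), (\<beta>, d, j)) \<Rightarrow>
        (\<beta> = \<alpha> \<and> d = c \<and> j = i + 1) \<or>
        (i = card c \<and> j = 1 \<and> DSC_arc Sig I X delta (\<alpha>, c) (\<beta>, d)))"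

definition positive_node ::
  "'a set \<Rightarrow> ('a \<times> 'a) set \<Rightarrow> 'x set \<Rightarrow> ('x \<Rightarrow> 'a \<Rightarrow> 'x option) \<Rightarrow> 'x \<Rightarrow> 'a set \<Rightarrow> bool" where
  "positive_node Sig I X delta \<alpha> c \<longleftrightarrow>
     (\<exists>x\<in>M_at Sig delta \<alpha>.
        \<forall>y\<in>M_at Sig delta (the (run delta (Some \<alpha>) x)).
          x @ y \<noteq> [] \<and> first_clique_is Sig I (x @ y) c)"

definition ADSC_pos_nodes ::
  "'a set \<Rightarrow> ('a \<times> 'a) set \<Rightarrow> 'x set \<Rightarrow> ('x \<Rightarrow> 'a \<Rightarrow> 'x option) \<Rightarrow> ('x \<times> 'a set \<times> nat) set" where
  "ADSC_pos_nodes Sig I X delta =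
     {(\<alpha>, c, i). (\<alpha>, c, i) \<in> ADSC_nodes Sig I X delta \<and> positive_node Sig I X delta \<alpha> c}"

text \<open>Adjacency matrix of the digraph with finite node set V and arc relation E,
  w.r.t. an (arbitrary) enumeration of V; the spectral radius does not depend on it.\<close>
definition adjacency_mat :: "'v set \<Rightarrow> ('v \<Rightarrow> 'v \<Rightarrow> bool) \<Rightarrow> complex mat" where
  "adjacency_mat V E =
     (let vs = (SOME vs. distinct vs \<and> set vs = V)
      in mat (length vs) (length vs) (\<lambda>(i, j). if E (vs ! i) (vs ! j) then 1 else 0))"

definition digraph_spectral_radius :: "'v set \<Rightarrow> ('v \<Rightarrow> 'v \<Rightarrow> bool) \<Rightarrow> real" where
  "digraph_spectral_radius V E = spectral_radius (adjacency_mat V E)"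

end

theory Submission
  imports Defs
begin


locale tm =
  fixes Sig :: "'a set" and I :: "('a \<times> 'a) set"
  assumes tm: "trace_monoid Sig I"
begin

lemma finSig: "finite Sig" using tm unfolding trace_monoid_def by auto
lemma I_sub: "(a,b) \<in> I \<Longrightarrow> a \<in> Sig \<and> b \<in> Sig" using tm unfolding trace_monoid_def by auto
lemma I_sym: "(a,b) \<in> I \<Longrightarrow> (b,a) \<in> I" using tm unfolding trace_monoid_def sym_def by auto
lemma I_irr: "(a,a) \<notin> I" using tm unfolding trace_monoid_def irrefl_def by auto
lemma I_neq: "(a,b) \<in> I \<Longrightarrow> a \<noteq> b" using I_irr by auto

lemma dep_iff: "(a,b) \<in> dep Sig I \<longleftrightarrow> a \<in> Sig \<and> b \<in> Sig \<and> (a,b) \<notin> I"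
  unfolding dep_def by auto
lemma dep_refl: "a \<in> Sig \<Longrightarrow> (a,a) \<in> dep Sig I" using I_irr dep_iff by auto
lemma dep_sym: "(a,b) \<in> dep Sig I \<Longrightarrow> (b,a) \<in> dep Sig I" using I_sym dep_iff by auto

lemma swap_step_sym: "swap_step I u v \<Longrightarrow> swap_step I v u"
  by (induction rule: swap_step.induct) (metis I_sym swap_step.intros)

lemma swap_step_length: "swap_step I u v \<Longrightarrow> length u = length v"
  by (induction rule: swap_step.induct) auto
lemma swap_step_set: "swap_step I u v \<Longrightarrow> set u = set v"
  by (induction rule: swap_step.induct) auto

lemma trace_eq_refl[simp]: "trace_eq I u u" unfolding trace_eq_def by simp
lemma trace_eq_trans: "trace_eq I u v \<Longrightarrow> trace_eq I v w \<Longrightarrow> trace_eq I u w"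
  unfolding trace_eq_def by simp
lemma trace_eq_sym: "trace_eq I u v \<Longrightarrow> trace_eq I v u"
  unfolding trace_eq_def
  by (induction rule: rtranclp_induct) (auto intro: swap_step_sym converse_rtranclp_into_rtranclp)
lemma trace_eq_length: "trace_eq I u v \<Longrightarrow> length u = length v"
  unfolding trace_eq_def by (induction rule: rtranclp_induct) (auto dest: swap_step_length)
lemma trace_eq_set: "trace_eq I u v \<Longrightarrow> set u = set v"
  unfolding trace_eq_def by (induction rule: rtranclp_induct) (auto dest: swap_step_set)

lemma swap_step_app_left: "swap_step I u v \<Longrightarrow> swap_step I (w@u) (w@v)"
  by (induction rule: swap_step.induct) (metis append.assoc swap_step.intros)
lemma swap_step_app_right: "swap_step I u v \<Longrightarrow> swap_step I (u@w) (v@w)"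
  by (induction rule: swap_step.induct) (metis append.assoc swap_step.intros)

lemma trace_eq_app_left: "trace_eq I u v \<Longrightarrow> trace_eq I (w@u) (w@v)"
  unfolding trace_eq_def
  by (induction rule: rtranclp_induct) (auto intro: swap_step_app_left rtranclp.rtrancl_into_rtrancl)
lemma trace_eq_app_right: "trace_eq I u v \<Longrightarrow> trace_eq I (u@w) (v@w)"
  unfolding trace_eq_def
  by (induction rule: rtranclp_induct) (auto intro: swap_step_app_right rtranclp.rtrancl_into_rtrancl)
lemma trace_eq_app: "trace_eq I u u' \<Longrightarrow> trace_eq I v v' \<Longrightarrow> trace_eq I (u@v) (u'@v')"
  by (meson trace_eq_app_left trace_eq_app_right trace_eq_trans)

lemma swap_eq: "(a,b) \<in> I \<Longrightarrow> trace_eq I (u @ [a, b] @ v) (u @ [b, a] @ v)"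
  unfolding trace_eq_def using swap_step.intros[of a b I u v] by auto

lemma comm_end: "(\<forall>b\<in>set p. (b,x) \<in> I) \<Longrightarrow> trace_eq I (p@[x]) (x#p)"
proof (induction p)
  case Nil then show ?case by simp
next
  case (Cons b p)
  then have "trace_eq I (b # p @ [x]) (b # x # p)"
    using trace_eq_app_left[of "p@[x]" "x#p" "[b]"] by simp
  moreover have "trace_eq I (b # x # p) (x # b # p)"
    using swap_eq[of b x "[]" p] Cons by simp
  ultimately show ?case using trace_eq_trans by auto
qed

lemma perm_indep:
  "distinct u \<Longrightarrow> distinct v \<Longrightarrow> set u = set v \<Longrightarrow>
   (\<forall>a\<in>set u. \<forall>b\<in>set u. a \<noteq> b \<longrightarrow> (a,b) \<in> I) \<Longrightarrow> trace_eq I u v"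
proof (induction u arbitrary: v)
  case Nil then show ?case by simp
next
  case (Cons x u)
  then have "x \<in> set v" by auto
  then obtain v1 v2 where v: "v = v1 @ x # v2" by (meson split_list)
  have d: "distinct (v1 @ v2)" "x \<notin> set v1" using Cons.prems v by auto
  have s: "set u = set (v1 @ v2)" using Cons.prems v by auto
  have ih: "trace_eq I u (v1 @ v2)" using Cons.IH[OF _ d(1) s] Cons.prems by auto
  have "\<forall>b\<in>set v1. (b,x) \<in> I" using Cons.prems v d by auto
  then have "trace_eq I (v1 @ [x]) (x # v1)" by (rule comm_end)
  then have "trace_eq I (x # v1 @ v2) (v1 @ [x] @ v2)"
    using trace_eq_app_right[of "x # v1" "v1@[x]" v2] trace_eq_sym by auto
  moreover have "trace_eq I (x # u) (x # v1 @ v2)" using trace_eq_app_left[OF ih, of "[x]"] by simp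
  ultimately show ?case using v trace_eq_trans by auto
qed

lemma clique_word_props: "finite c \<Longrightarrow> distinct (clique_word c) \<and> set (clique_word c) = c"
  unfolding clique_word_def by (rule someI_ex) (metis finite_distinct_list)

lemma cliques_finite: "c \<in> cliques Sig I \<Longrightarrow> finite c"
  unfolding cliques_def using finSig finite_subset by auto

lemma cw_set[simp]: "c \<in> cliques Sig I \<Longrightarrow> set (clique_word c) = c"
  using clique_word_props cliques_finite by blast
lemma cw_distinct: "c \<in> cliques Sig I \<Longrightarrow> distinct (clique_word c)"
  using clique_word_props cliques_finite by blast
lemma cw_length: "c \<in> cliques Sig I \<Longrightarrow> length (clique_word c) = card c"
  using clique_word_props cliques_finite distinct_card by metis

lemma cw_insert:
  assumes c: "c \<in> cliques Sig I" and a: "a \<notin> c" "\<forall>b\<in>c. (b,a) \<in> I"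
  shows "trace_eq I (clique_word (insert a c)) (clique_word c @ [a])"
proof -
  have f: "finite (insert a c)" using cliques_finite[OF c] by auto
  show ?thesis
  proof (rule perm_indep)
    show "distinct (clique_word (insert a c))" using clique_word_props[OF f] by auto
    show "distinct (clique_word c @ [a])" using cw_distinct[OF c] a cw_set[OF c] by auto
    show "set (clique_word (insert a c)) = set (clique_word c @ [a])"
      using clique_word_props[OF f] cw_set[OF c] by auto
    show "\<forall>x\<in>set (clique_word (insert a c)). \<forall>y\<in>set (clique_word (insert a c)). x \<noteq> y \<longrightarrow> (x, y) \<in> I"
      using clique_word_props[OF f] c a I_sym unfolding cliques_def by auto
  qed
qed

lemma swap_remove1: "swap_step I u v \<Longrightarrow> trace_eq I (remove1 a u) (remove1 a v)"
proof (induction rule: swap_step.induct)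
  case (1 x y p q)
  have xy: "x \<noteq> y" using 1 I_neq by auto
  show ?case
  proof (cases "a \<in> set p")
    case True
    then show ?thesis using swap_eq[OF 1, of "remove1 a p" q] by (simp add: remove1_append)
  next
    case False
    then show ?thesis
    proof (cases "a = x")
      case True then show ?thesis using False xy by (simp add: remove1_append)
    next
      case ax: False
      show ?thesis
      proof (cases "a = y")
        case True then show ?thesis using False xy ax by (simp add: remove1_append)
      next
        case False
        then show ?thesis using \<open>a \<notin> set p\<close> ax swap_eq[OF 1, of p "remove1 a q"]
          by (simp add: remove1_append)
      qed
    qed
  qed
qed

lemma trace_eq_remove1: "trace_eq I u v \<Longrightarrow> trace_eq I (remove1 a u) (remove1 a v)"
  unfolding trace_eq_def
  apply (induction rule: rtranclp_induct)
   apply simp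
  using swap_remove1 unfolding trace_eq_def by (meson rtranclp_trans)

lemma cancel_left1: "trace_eq I (a#u) (a#v) \<Longrightarrow> trace_eq I u v"
  using trace_eq_remove1[of "a#u" "a#v" a] by simp

lemma cancel_left: "trace_eq I (w@u) (w@v) \<Longrightarrow> trace_eq I u v"
  by (induction w) (auto intro: cancel_left1)

lemma swap_rev: "swap_step I u v \<Longrightarrow> swap_step I (rev u) (rev v)"
proof (induction rule: swap_step.induct)
  case (1 a b p q)
  then show ?case using swap_step.intros[of b a I "rev q" "rev p"] I_sym by auto
qed

lemma trace_eq_rev: "trace_eq I u v \<Longrightarrow> trace_eq I (rev u) (rev v)"
  unfolding trace_eq_def
  by (induction rule: rtranclp_induct) (auto intro: swap_rev rtranclp.rtrancl_into_rtrancl)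

lemma cancel_right: "trace_eq I (u@w) (v@w) \<Longrightarrow> trace_eq I u v"
proof -
  assume "trace_eq I (u@w) (v@w)"
  then have "trace_eq I (rev w @ rev u) (rev w @ rev v)" using trace_eq_rev by fastforce
  then have "trace_eq I (rev u) (rev v)" by (rule cancel_left)
  then show ?thesis using trace_eq_rev by fastforce
qed

definition minl :: "'a list \<Rightarrow> 'a set" where
  "minl w = {a \<in> set w. \<forall>b \<in> set (takeWhile (\<lambda>x. x \<noteq> a) w). (b,a) \<in> I}"

lemma takeWhile_app_notin: "a \<notin> set p \<Longrightarrow> takeWhile (\<lambda>x. x \<noteq> a) (p @ q) = p @ takeWhile (\<lambda>x. x \<noteq> a) q"
  by (induction p) auto
lemma takeWhile_app_in: "a \<in> set p \<Longrightarrow> takeWhile (\<lambda>x. x \<noteq> a) (p @ q) = takeWhile (\<lambda>x. x \<noteq> a) p"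
  by (induction p) auto

lemma swap_minl: "swap_step I u v \<Longrightarrow> minl u = minl v"
proof (induction rule: swap_step.induct)
  case (1 x y p q)
  have xy: "x \<noteq> y" using 1 I_neq by auto
  have "a \<in> minl (p @ [x, y] @ q) \<longleftrightarrow> a \<in> minl (p @ [y, x] @ q)" for a
  proof (cases "a \<in> set p")
    case True
    then show ?thesis unfolding minl_def by (simp add: takeWhile_app_in)
  next
    case False
    then have e1: "takeWhile (\<lambda>z. z \<noteq> a) (p @ x # y # q) = p @ takeWhile (\<lambda>z. z \<noteq> a) (x # y # q)"
      and e2: "takeWhile (\<lambda>z. z \<noteq> a) (p @ y # x # q) = p @ takeWhile (\<lambda>z. z \<noteq> a) (y # x # q)"
      using takeWhile_app_notin[OF False] by blast+
    show ?thesis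
    proof (cases "a = x")
      case True
      have t1: "takeWhile (\<lambda>z. z \<noteq> a) (p @ x # y # q) = p" using e1 True by simp
      have t2: "takeWhile (\<lambda>z. z \<noteq> a) (p @ y # x # q) = p @ [y]" using e2 True xy by simp
      have "(y, a) \<in> I" using True 1 I_sym by auto
      then show ?thesis using t1 t2 by (simp add: minl_def) blast
    next
      case ax: False
      show ?thesis
      proof (cases "a = y")
        case True
        have t1: "takeWhile (\<lambda>z. z \<noteq> a) (p @ x # y # q) = p @ [x]" using e1 True xy by simp
        have t2: "takeWhile (\<lambda>z. z \<noteq> a) (p @ y # x # q) = p" using e2 True by simp
        have "(x, a) \<in> I" using True 1 by auto
        then show ?thesis using t1 t2 by (simp add: minl_def) blast
      next
        case False
        have t1: "takeWhile (\<lambda>z. z \<noteq> a) (p @ x # y # q) = p @ x # y # takeWhile (\<lambda>z. z \<noteq> a) q" using e1 False ax by simp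
        have t2: "takeWhile (\<lambda>z. z \<noteq> a) (p @ y # x # q) = p @ y # x # takeWhile (\<lambda>z. z \<noteq> a) q" using e2 False ax by simp
        show ?thesis using t1 t2 by (simp add: minl_def) blast
      qed
    qed
  qed
  then show ?case by blast
qed

lemma trace_eq_minl: "trace_eq I u v \<Longrightarrow> minl u = minl v"
  unfolding trace_eq_def by (induction rule: rtranclp_induct) (auto dest: swap_minl)

end


context tm begin

abbreviation D where "D \<equiv> dep Sig I"

definition nfs :: "'a set list \<Rightarrow> bool" where
  "nfs cs \<longleftrightarrow> set cs \<subseteq> cliques Sig I \<and> (\<forall>i. Suc i < length cs \<longrightarrow> clique_arrow Sig I (cs!i) (cs!Suc i))"

definition cw :: "'a set list \<Rightarrow> 'a list" where
  "cw cs = concat (map clique_word cs)"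

lemma cw_simps[simp]: "cw [] = []" "cw (c#cs) = clique_word c @ cw cs" "cw (cs@ds) = cw cs @ cw ds"
  unfolding cw_def by auto

lemma is_nf_iff: "is_normal_form Sig I cs w \<longleftrightarrow> nfs cs \<and> trace_eq I (cw cs) w"
  unfolding is_normal_form_def nfs_def cw_def by auto

lemma nfs_Cons: "nfs (c#cs) \<longleftrightarrow> c \<in> cliques Sig I \<and> nfs cs \<and> (cs \<noteq> [] \<longrightarrow> clique_arrow Sig I c (hd cs))"
proof -
  have "(\<forall>i. Suc i < length (c#cs) \<longrightarrow> clique_arrow Sig I ((c#cs)!i) ((c#cs)!Suc i)) \<longleftrightarrow>
        (cs \<noteq> [] \<longrightarrow> clique_arrow Sig I c (hd cs)) \<and> (\<forall>i. Suc i < length cs \<longrightarrow> clique_arrow Sig I (cs!i) (cs!Suc i))"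
    (is "?L \<longleftrightarrow> ?R")
  proof
    assume L: ?L
    have "cs \<noteq> [] \<longrightarrow> clique_arrow Sig I c (hd cs)" using L[rule_format, of 0] by (cases cs) auto
    moreover have "\<forall>i. Suc i < length cs \<longrightarrow> clique_arrow Sig I (cs!i) (cs!Suc i)"
      using L[rule_format, of "Suc _"] by auto
    ultimately show ?R by blast
  next
    assume R: ?R
    show ?L
    proof (intro allI impI)
      fix i assume "Suc i < length (c#cs)"
      then show "clique_arrow Sig I ((c#cs)!i) ((c#cs)!Suc i)"
        using R by (cases i) (auto simp: hd_conv_nth)
    qed
  qed
  then show ?thesis unfolding nfs_def by auto
qed

lemma nfs_Nil[simp]: "nfs []" unfolding nfs_def by simp

lemma nfs_drop: "nfs cs \<Longrightarrow> nfs (drop k cs)"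
  unfolding nfs_def by (auto dest: in_set_dropD)

lemma nfs_take: "nfs cs \<Longrightarrow> nfs (take k cs)"
  unfolding nfs_def by (auto dest: in_set_takeD)

lemma clique_ne: "c \<in> cliques Sig I \<Longrightarrow> c \<noteq> {}" unfolding cliques_def by auto
lemma clique_sub: "c \<in> cliques Sig I \<Longrightarrow> c \<subseteq> Sig" unfolding cliques_def by auto

lemma length_cw: "set cs \<subseteq> cliques Sig I \<Longrightarrow> length (cw cs) = sum_list (map card cs)"
  by (induction cs) (auto simp: cw_length)

lemma set_cw: "set cs \<subseteq> cliques Sig I \<Longrightarrow> set (cw cs) = \<Union> (set cs)"
  by (induction cs) auto

lemma cw_words: "set cs \<subseteq> cliques Sig I \<Longrightarrow> set (cw cs) \<subseteq> Sig"
  using set_cw clique_sub by blast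

lemma cw_empty_iff: "set cs \<subseteq> cliques Sig I \<Longrightarrow> cw cs = [] \<longleftrightarrow> cs = []"
proof
  assume a: "set cs \<subseteq> cliques Sig I" "cw cs = []"
  then have "\<Union> (set cs) = {}" using set_cw[OF a(1)] by simp
  then show "cs = []" using a clique_ne by (cases cs) auto
qed simp

lemma minl_not_hd:
  "nfs (c#cs) \<Longrightarrow> a \<in> set (cw (c#cs)) \<Longrightarrow> a \<notin> c \<Longrightarrow>
   \<exists>b\<in>set (takeWhile (\<lambda>x. x \<noteq> a) (cw (c#cs))). (b,a) \<in> D"
proof (induction cs arbitrary: c)
  case Nil
  then show ?case using cw_set by (auto simp: nfs_Cons)
next
  case (Cons c' cs)
  have cc: "c \<in> cliques Sig I" using Cons.prems nfs_Cons by auto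
  have anc: "a \<notin> set (clique_word c)" using Cons.prems(3) cw_set[OF cc] by auto
  have tw: "takeWhile (\<lambda>x. x \<noteq> a) (cw (c#c'#cs)) = clique_word c @ takeWhile (\<lambda>x. x \<noteq> a) (cw (c'#cs))"
    using takeWhile_app_notin[OF anc] by simp
  show ?case
  proof (cases "a \<in> c'")
    case True
    have "clique_arrow Sig I c c'" using Cons.prems(1) nfs_Cons by auto
    then obtain b where "b \<in> c" "(b,a) \<in> D" using True unfolding clique_arrow_def by auto
    then show ?thesis unfolding tw using cw_set[OF cc] by auto
  next
    case False
    have "nfs (c'#cs)" using Cons.prems(1) nfs_Cons by auto
    moreover have "a \<in> set (cw (c'#cs))" using Cons.prems(2) anc by auto
    ultimately obtain b where "b\<in>set (takeWhile (\<lambda>x. x \<noteq> a) (cw (c'#cs)))" "(b,a) \<in> D"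
      using Cons.IH False by blast
    then show ?thesis unfolding tw by auto
  qed
qed

lemma minl_cw: assumes "nfs (c#cs)" shows "minl (cw (c#cs)) = c"
proof -
  have cc: "c \<in> cliques Sig I" using assms nfs_Cons by auto
  have "c \<subseteq> minl (cw (c#cs))"
  proof
    fix a assume a: "a \<in> c"
    then have "a \<in> set (clique_word c)" using cc by simp
    then have tw: "takeWhile (\<lambda>x. x \<noteq> a) (cw (c#cs)) = takeWhile (\<lambda>x. x \<noteq> a) (clique_word c)"
      using takeWhile_app_in by simp
    have "\<forall>b \<in> set (takeWhile (\<lambda>x. x \<noteq> a) (cw (c#cs))). (b,a) \<in> I"
    proof
      fix b assume "b \<in> set (takeWhile (\<lambda>x. x \<noteq> a) (cw (c#cs)))"
      then have "b \<in> c" "b \<noteq> a" unfolding tw using cc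
        by (auto dest: set_takeWhileD)
      then show "(b,a) \<in> I" using a cc unfolding cliques_def by auto
    qed
    then show "a \<in> minl (cw (c#cs))" unfolding minl_def using a cc by auto
  qed
  moreover have "minl (cw (c#cs)) \<subseteq> c"
  proof
    fix a assume a: "a \<in> minl (cw (c#cs))"
    show "a \<in> c"
    proof (rule ccontr)
      assume "a \<notin> c"
      then obtain b where "b\<in>set (takeWhile (\<lambda>x. x \<noteq> a) (cw (c#cs)))" "(b,a) \<in> D"
        using minl_not_hd[OF assms] a unfolding minl_def by blast
      then show False using a unfolding minl_def dep_iff by auto
    qed
  qed
  ultimately show ?thesis by auto
qed

lemma nf_unique: "nfs cs \<Longrightarrow> nfs ds \<Longrightarrow> trace_eq I (cw cs) (cw ds) \<Longrightarrow> cs = ds"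
proof (induction cs arbitrary: ds)
  case Nil
  then have "cw ds = []" using trace_eq_length by fastforce
  then show ?case using cw_empty_iff Nil.prems nfs_def by auto
next
  case (Cons c cs)
  have "cw (c#cs) \<noteq> []" using cw_empty_iff Cons.prems nfs_def by blast
  then have "cw ds \<noteq> []" using trace_eq_length Cons.prems by fastforce
  then obtain d ds' where ds: "ds = d # ds'" by (cases ds) auto
  have "c = d" using minl_cw[OF Cons.prems(1)] minl_cw[of d ds'] Cons.prems ds trace_eq_minl by metis
  then have "trace_eq I (clique_word c @ cw cs) (clique_word c @ cw ds')" using Cons.prems ds by simp
  then have "trace_eq I (cw cs) (cw ds')" by (rule cancel_left)
  then have "cs = ds'" using Cons.IH Cons.prems ds nfs_Cons by blast
  then show ?case using ds \<open>c = d\<close> by simp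
qed

fun lvl :: "'a set list \<Rightarrow> 'a \<Rightarrow> nat" where
  "lvl [] a = 0"
| "lvl (c#cs) a = (if 0 < lvl cs a then Suc (lvl cs a) else if (\<exists>b\<in>c. (b,a) \<in> D) then 1 else 0)"

lemma lvl_le: "lvl cs a \<le> length cs"
  by (induction cs) auto

lemma lvl_above: "k < length cs \<Longrightarrow> lvl cs a \<le> k \<Longrightarrow> b \<in> cs!k \<Longrightarrow> (b,a) \<notin> D"
proof (induction cs arbitrary: k)
  case Nil then show ?case by simp
next
  case (Cons c cs)
  show ?case
  proof (cases k)
    case 0
    then show ?thesis using Cons.prems by (auto split: if_splits)
  next
    case (Suc k')
    have "lvl cs a \<le> k'" using Cons.prems Suc by (auto split: if_splits)
    then show ?thesis using Cons.IH[of k'] Cons.prems Suc by auto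
  qed
qed

lemma lvl_pos: "0 < lvl cs a \<Longrightarrow> \<exists>b\<in>cs!(lvl cs a - 1). (b,a) \<in> D"
proof (induction cs)
  case Nil then show ?case by simp
next
  case (Cons c cs)
  show ?case
  proof (cases "0 < lvl cs a")
    case True
    then show ?thesis using Cons by (auto simp: nth_Cons')
  next
    case False
    then show ?thesis using Cons.prems by (auto split: if_splits)
  qed
qed

lemma lvl_gt: "j < length cs \<Longrightarrow> b \<in> cs!j \<Longrightarrow> (b,a) \<in> D \<Longrightarrow> j < lvl cs a"
  using lvl_above not_less by blast

definition ins :: "'a set list \<Rightarrow> 'a \<Rightarrow> 'a set list" where
  "ins cs a = (if lvl cs a < length cs then cs[lvl cs a := insert a (cs ! lvl cs a)] else cs @ [{a}])"

lemma ins_length: "length cs \<le> length (ins cs a)" "length (ins cs a) \<le> Suc (length cs)"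
  unfolding ins_def by auto

lemma ins_mono: "k < length cs \<Longrightarrow> cs!k \<subseteq> ins cs a ! k"
  unfolding ins_def by (auto simp: nth_list_update nth_append)

lemma ins_at: "lvl cs a < length (ins cs a) \<and> a \<in> ins cs a ! lvl cs a"
  unfolding ins_def using lvl_le[of cs a] by (auto simp: nth_append)

lemma ins_other: "k \<noteq> lvl cs a \<Longrightarrow> k < length (ins cs a) \<Longrightarrow> k < length cs \<and> ins cs a ! k = cs ! k"
  unfolding ins_def using lvl_le[of cs a] by (auto simp: nth_append split: if_splits)

lemma indep_of_notdep: "a \<in> Sig \<Longrightarrow> b \<in> Sig \<Longrightarrow> (b,a) \<notin> D \<Longrightarrow> (b,a) \<in> I"
  using dep_iff by auto

lemma clique_insert:
  assumes c: "c \<in> cliques Sig I" and a: "a \<in> Sig" and nd: "\<forall>b\<in>c. (b,a) \<notin> D"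
  shows "insert a c \<in> cliques Sig I" "a \<notin> c" "\<forall>b\<in>c. (b,a) \<in> I"
proof -
  show "a \<notin> c" using nd dep_refl[OF a] by auto
  show bI: "\<forall>b\<in>c. (b,a) \<in> I" using nd a clique_sub[OF c] indep_of_notdep by auto
  have bI2: "\<forall>b\<in>c. (a,b) \<in> I" using bI I_sym by blast
  show "insert a c \<in> cliques Sig I" using c a bI bI2 unfolding cliques_def by auto
qed

lemma single_clique: "a \<in> Sig \<Longrightarrow> {a} \<in> cliques Sig I" unfolding cliques_def by auto

lemma cw_single: "clique_word {a} = [a]"
proof -
  have ds: "distinct (clique_word {a}) \<and> set (clique_word {a}) = {a}" using clique_word_props[of "{a}"] by simp
  then have "length (clique_word {a}) = card {a}" using distinct_card by metis
  then have "length (clique_word {a}) = 1" by simp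
  then obtain x where "clique_word {a} = [x]" by (metis One_nat_def length_0_conv length_Suc_conv)
  then show ?thesis using ds by simp
qed

lemma ins_nfs: assumes cs: "nfs cs" and a: "a \<in> Sig" shows "nfs (ins cs a)"
proof -
  let ?k = "lvl cs a"
  have cl: "set cs \<subseteq> cliques Sig I" using cs nfs_def by auto
  have ar: "\<And>i. Suc i < length cs \<Longrightarrow> clique_arrow Sig I (cs!i) (cs!Suc i)" using cs nfs_def by auto
  show ?thesis
  proof (cases "?k < length cs")
    case True
    have ck: "cs!?k \<in> cliques Sig I" using cl True by auto
    have nd: "\<forall>b\<in>cs!?k. (b,a) \<notin> D" using lvl_above[OF True] by auto
    have ins: "ins cs a = cs[?k := insert a (cs!?k)]" using True ins_def by auto
    have "set (ins cs a) \<subseteq> cliques Sig I" unfolding ins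
      using cl clique_insert[OF ck a nd] by (auto dest: set_update_subset_insert[THEN subsetD])
    moreover have "clique_arrow Sig I (ins cs a ! i) (ins cs a ! Suc i)" if i: "Suc i < length (ins cs a)" for i
    proof -
      have i': "Suc i < length cs" using i ins by simp
      consider "Suc i = ?k" | "i = ?k" | "Suc i \<noteq> ?k \<and> i \<noteq> ?k" by blast
      then show ?thesis
      proof cases
        case 1
        then obtain b where "b \<in> cs!i" "(b,a) \<in> D" using lvl_pos[of cs a] by (metis diff_Suc_1 zero_less_Suc)
        then show ?thesis using ar[OF i'] 1 True unfolding ins clique_arrow_def by (auto simp: nth_list_update)
      next
        case 2
        then show ?thesis using ar[OF i'] True unfolding ins clique_arrow_def by (auto simp: nth_list_update)
      next
        case 3
        then show ?thesis using ar[OF i'] unfolding ins by (auto simp: nth_list_update)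
      qed
    qed
    ultimately show ?thesis unfolding nfs_def by auto
  next
    case False
    then have k: "?k = length cs" using lvl_le[of cs a] by auto
    have ins: "ins cs a = cs @ [{a}]" using False ins_def by auto
    have "set (ins cs a) \<subseteq> cliques Sig I" unfolding ins using cl single_clique[OF a] by auto
    moreover have "clique_arrow Sig I (ins cs a ! i) (ins cs a ! Suc i)" if i: "Suc i < length (ins cs a)" for i
    proof (cases "Suc i < length cs")
      case True
      then show ?thesis using ar[OF True] unfolding ins by (auto simp: nth_append)
    next
      case False
      then have si: "Suc i = length cs" using i ins by auto
      then obtain b where "b \<in> cs!i" "(b,a) \<in> D" using lvl_pos[of cs a] k by (metis diff_Suc_1 zero_less_Suc)
      then show ?thesis using si unfolding ins clique_arrow_def by (auto simp: nth_append)
    qed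
    ultimately show ?thesis unfolding nfs_def by auto
  qed
qed

lemma ins_cw: assumes cs: "nfs cs" and a: "a \<in> Sig" shows "trace_eq I (cw (ins cs a)) (cw cs @ [a])"
proof -
  let ?k = "lvl cs a"
  have cl: "set cs \<subseteq> cliques Sig I" using cs nfs_def by auto
  show ?thesis
  proof (cases "?k < length cs")
    case True
    have ck: "cs!?k \<in> cliques Sig I" using cl True by auto
    have nd: "\<forall>b\<in>cs!?k. (b,a) \<notin> D" using lvl_above[OF True] by auto
    have ins: "ins cs a = cs[?k := insert a (cs!?k)]" using True ins_def by auto
    have dec: "cs = take ?k cs @ cs!?k # drop (Suc ?k) cs" using True by (simp add: id_take_nth_drop)
    have ins2: "ins cs a = take ?k cs @ insert a (cs!?k) # drop (Suc ?k) cs"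
      unfolding ins using True by (simp add: upd_conv_take_nth_drop)
    let ?R = "cw (drop (Suc ?k) cs)"
    have "trace_eq I (clique_word (insert a (cs!?k))) (clique_word (cs!?k) @ [a])"
      using cw_insert[OF ck] clique_insert[OF ck a nd] by auto
    then have s1: "trace_eq I (cw (ins cs a)) (cw (take ?k cs) @ clique_word (cs!?k) @ [a] @ ?R)"
      unfolding ins2 using trace_eq_app trace_eq_refl by (metis append.assoc cw_simps(2) cw_simps(3))
    have "\<forall>b\<in>set ?R. (b,a) \<in> I"
    proof
      fix b assume "b \<in> set ?R"
      have "set (drop (Suc ?k) cs) \<subseteq> cliques Sig I" using cl by (auto dest: in_set_dropD)
      then obtain c where c: "c \<in> set (drop (Suc ?k) cs)" "b \<in> c"
        using set_cw[of "drop (Suc ?k) cs"] \<open>b \<in> set ?R\<close> by auto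
      then obtain m where m: "m < length (drop (Suc ?k) cs)" "c = drop (Suc ?k) cs ! m"
        by (auto simp: in_set_conv_nth)
      then have j: "Suc ?k + m < length cs" "b \<in> cs ! (Suc ?k + m)" using c by auto
      then have "(b,a) \<notin> D" using lvl_above[of "Suc ?k + m" cs a b] by auto
      moreover have "b \<in> Sig" using j cl clique_sub by (meson nth_mem subsetD)
      ultimately show "(b,a) \<in> I" using indep_of_notdep a by auto
    qed
    then have "trace_eq I ([a] @ ?R) (?R @ [a])" using comm_end trace_eq_sym by auto
    then have "trace_eq I (cw (take ?k cs) @ clique_word (cs!?k) @ [a] @ ?R) (cw (take ?k cs) @ clique_word (cs!?k) @ ?R @ [a])"
      using trace_eq_app_left by (metis append.assoc)
    moreover have "cw (take ?k cs) @ clique_word (cs!?k) @ ?R @ [a] = cw cs @ [a]"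
      by (subst (3) dec) simp
    ultimately show ?thesis using s1 trace_eq_trans by metis
  next
    case False
    then show ?thesis unfolding ins_def by (simp add: cw_single)
  qed
qed

lemma foldl_ins: "nfs cs \<Longrightarrow> set u \<subseteq> Sig \<Longrightarrow> nfs (foldl ins cs u) \<and> trace_eq I (cw (foldl ins cs u)) (cw cs @ u)"
proof (induction u arbitrary: cs)
  case Nil then show ?case by simp
next
  case (Cons a u)
  have "nfs (ins cs a)" "trace_eq I (cw (ins cs a)) (cw cs @ [a])" using ins_nfs ins_cw Cons.prems by auto
  moreover have "nfs (foldl ins (ins cs a) u) \<and> trace_eq I (cw (foldl ins (ins cs a) u)) (cw (ins cs a) @ u)"
    using Cons.IH Cons.prems calculation by auto
  ultimately show ?case using trace_eq_app_right trace_eq_trans by fastforce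
qed

definition nf :: "'a list \<Rightarrow> 'a set list" where "nf w = foldl ins [] w"

lemma nf_props: "set w \<subseteq> Sig \<Longrightarrow> nfs (nf w) \<and> trace_eq I (cw (nf w)) w"
  using foldl_ins[of "[]" w] unfolding nf_def by simp

lemma foldl_mono: "k < length cs \<Longrightarrow> k < length (foldl ins cs u) \<and> cs!k \<subseteq> foldl ins cs u ! k"
proof (induction u arbitrary: cs)
  case Nil then show ?case by simp
next
  case (Cons a u)
  have "k < length (ins cs a)" using Cons.prems ins_length(1) by (meson less_le_trans)
  then show ?case using Cons.IH ins_mono[OF Cons.prems] by fastforce
qed

lemma foldl_length: "length cs \<le> length (foldl ins cs u)"
  by (induction u arbitrary: cs) (auto intro: le_trans ins_length(1))

lemma foldl_push:
  assumes "a \<in> set u" "j < length cs" "b \<in> cs!j" "(b,a) \<in> D"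
  shows "\<exists>k>j. k < length (foldl ins cs u) \<and> a \<in> foldl ins cs u ! k"
proof -
  obtain u1 u2 where u: "u = u1 @ a # u2" using assms(1) split_list by metis
  let ?cs1 = "foldl ins cs u1"
  have "j < length ?cs1" "b \<in> ?cs1 ! j" using foldl_mono assms by blast+
  then have jl: "j < lvl ?cs1 a" using lvl_gt assms(4) by blast
  let ?cs2 = "ins ?cs1 a"
  have "lvl ?cs1 a < length ?cs2" "a \<in> ?cs2 ! lvl ?cs1 a" using ins_at by auto
  then have "lvl ?cs1 a < length (foldl ins ?cs2 u2) \<and> a \<in> foldl ins ?cs2 u2 ! lvl ?cs1 a"
    using foldl_mono by blast
  then show ?thesis using jl u by auto
qed

definition covered :: "'a set list \<Rightarrow> bool" where
  "covered cs \<longleftrightarrow> (\<forall>b\<in>Sig. \<exists>j. 1 \<le> j \<and> j < length cs \<and> b \<in> cs!j)"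

lemma covered_ins: assumes "covered cs" "a \<in> Sig"
  shows "covered (ins cs a) \<and> ins cs a ! 0 = cs ! 0"
proof -
  obtain j where j: "1 \<le> j" "j < length cs" "a \<in> cs!j" using assms unfolding covered_def by auto
  then have "j < lvl cs a" using lvl_gt dep_refl assms(2) by blast
  then have "lvl cs a \<noteq> 0" by auto
  then have h: "ins cs a ! 0 = cs ! 0" using j unfolding ins_def by (auto simp: nth_append nth_list_update)
  have "covered (ins cs a)" using assms(1) ins_mono ins_length(1) unfolding covered_def
    by (meson less_le_trans subsetD)
  then show ?thesis using h by auto
qed

lemma covered_foldl: "covered cs \<Longrightarrow> set u \<subseteq> Sig \<Longrightarrow> covered (foldl ins cs u) \<and> foldl ins cs u ! 0 = cs ! 0"
  by (induction u arbitrary: cs) (auto dest: covered_ins)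

end


lemma run_None[simp]: "run delta None w = None"
  by (induction w) auto

lemma run_append: "run delta s (u@v) = run delta (run delta s u) v"
  by (induction u arbitrary: s) (auto split: option.splits)

lemma run_prefix: "run delta s (u@v) \<noteq> None \<Longrightarrow> run delta s u \<noteq> None"
  by (metis run_None run_append)

definition walks :: "'v set \<Rightarrow> ('v \<Rightarrow> 'v \<Rightarrow> bool) \<Rightarrow> nat \<Rightarrow> 'v list set" where
  "walks V E n = {p. length p = n \<and> set p \<subseteq> V \<and> successively E p}"

locale csys = tm Sig I for Sig :: "'a set" and I +
  fixes X :: "'x set" and delta :: "'x \<Rightarrow> 'a \<Rightarrow> 'x option"
  assumes cs: "concurrent_system Sig I X delta"
    and ntriv: "non_trivial Sig X delta"
    and irr: "irreducible_system Sig I X delta"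
begin

lemma finX: "finite X" using cs concurrent_system_def by auto
lemma X_ne: "X \<noteq> {}" using ntriv unfolding non_trivial_def by auto

lemma delta_X: "\<alpha> \<in> X \<Longrightarrow> a \<in> Sig \<Longrightarrow> delta \<alpha> a = Some \<beta> \<Longrightarrow> \<beta> \<in> X"
  using cs unfolding concurrent_system_def by fastforce

lemma run_X: "\<alpha> \<in> X \<Longrightarrow> set w \<subseteq> Sig \<Longrightarrow> run delta (Some \<alpha>) w = Some \<beta> \<Longrightarrow> \<beta> \<in> X"
proof (induction w arbitrary: \<alpha>)
  case Nil then show ?case by simp
next
  case (Cons a w)
  then obtain \<gamma> where g: "delta \<alpha> a = Some \<gamma>" by (cases "delta \<alpha> a") auto
  then have "\<gamma> \<in> X" using delta_X Cons.prems by auto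
  then show ?case using Cons g by auto
qed

lemma run_comm: "\<alpha> \<in> X \<Longrightarrow> (a,b) \<in> I \<Longrightarrow> run delta (Some \<alpha>) [a,b] = run delta (Some \<alpha>) [b,a]"
  using cs unfolding concurrent_system_def by fastforce

lemma run_swap: "swap_step I u v \<Longrightarrow> \<alpha> \<in> X \<Longrightarrow> set u \<subseteq> Sig \<Longrightarrow> run delta (Some \<alpha>) u = run delta (Some \<alpha>) v"
proof (induction rule: swap_step.induct)
  case (1 a b p q)
  show ?case
  proof (cases "run delta (Some \<alpha>) p")
    case None
    then show ?thesis by (simp add: run_append)
  next
    case (Some \<gamma>)
    then have "\<gamma> \<in> X" using run_X 1 by auto
    then have "run delta (Some \<gamma>) [a,b] = run delta (Some \<gamma>) [b,a]" using run_comm 1 by auto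
    moreover have "run delta (Some \<alpha>) (p @ [a, b] @ q) = run delta (run delta (Some \<gamma>) [a,b]) q"
      by (simp only: run_append Some)
    moreover have "run delta (Some \<alpha>) (p @ [b, a] @ q) = run delta (run delta (Some \<gamma>) [b,a]) q"
      by (simp only: run_append Some)
    ultimately show ?thesis by simp
  qed
qed

lemma run_trace_eq: "trace_eq I u v \<Longrightarrow> \<alpha> \<in> X \<Longrightarrow> set u \<subseteq> Sig \<Longrightarrow> run delta (Some \<alpha>) u = run delta (Some \<alpha>) v"
  unfolding trace_eq_def
proof (induction rule: rtranclp_induct)
  case base then show ?case by simp
next
  case (step y z)
  have "set y = set u" using step(1) trace_eq_set unfolding trace_eq_def by auto
  then show ?case using step run_swap by auto
qed

definition nfa :: "'x \<Rightarrow> 'a set list \<Rightarrow> bool" where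
  "nfa \<alpha> cs \<longleftrightarrow> \<alpha> \<in> X \<and> nfs cs \<and> run delta (Some \<alpha>) (cw cs) \<noteq> None"

fun NL :: "'x \<Rightarrow> 'a set list \<Rightarrow> ('x \<times> 'a set \<times> nat) list" where
  "NL \<alpha> [] = []"
| "NL \<alpha> (c#cs) = map (\<lambda>i. (\<alpha>, c, i)) [1..<Suc (card c)] @ NL (the (act_clique delta \<alpha> c)) cs"

lemma nfa_Cons: "nfa \<alpha> (c#cs) \<Longrightarrow> \<exists>\<beta>. act_clique delta \<alpha> c = Some \<beta> \<and> \<beta> \<in> X \<and> nfa \<beta> cs \<and> c \<in> cliques Sig I"
proof -
  assume a: "nfa \<alpha> (c#cs)"
  then have c: "c \<in> cliques Sig I" "nfs cs" using nfs_Cons nfa_def by auto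
  have r: "run delta (Some \<alpha>) (clique_word c @ cw cs) \<noteq> None" using a nfa_def by auto
  then obtain \<beta> where b: "act_clique delta \<alpha> c = Some \<beta>"
    using run_prefix unfolding act_clique_def by fastforce
  have "\<beta> \<in> X" using run_X[of \<alpha> "clique_word c"] b a c clique_sub unfolding act_clique_def nfa_def by auto
  moreover have "run delta (Some \<beta>) (cw cs) \<noteq> None" using r b unfolding act_clique_def by (simp add: run_append)
  ultimately show ?thesis using b c unfolding nfa_def by auto
qed

lemma length_NL: "set cs \<subseteq> cliques Sig I \<Longrightarrow> length (NL \<alpha> cs) = length (cw cs)"
  by (induction cs arbitrary: \<alpha>) (auto simp: cw_length)

lemma NL_nth_first: "k < card c \<Longrightarrow> NL \<alpha> (c#cs) ! k = (\<alpha>, c, Suc k)"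
  by (auto simp: nth_append)

lemma take1_drop: "k < length xs \<Longrightarrow> take 1 (drop k xs) = [xs ! k]"
  by (metis Cons_nth_drop_Suc One_nat_def take_Suc_Cons take_0)

lemma card_clique_pos: "c \<in> cliques Sig I \<Longrightarrow> 0 < card c"
  using cliques_finite clique_ne card_gt_0_iff by blast

lemma card_clique_le: "c \<in> cliques Sig I \<Longrightarrow> card c \<le> card Sig"
  using clique_sub finSig card_mono by blast

lemma NL_set: "nfa \<alpha> cs \<Longrightarrow> (\<gamma>, c, i) \<in> set (NL \<alpha> cs) \<Longrightarrow>
   \<exists>k < length cs. c = cs!k \<and> run delta (Some \<alpha>) (cw (take k cs)) = Some \<gamma> \<and> 1 \<le> i \<and> i \<le> card c"
proof (induction cs arbitrary: \<alpha>)
  case Nil then show ?case by simp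
next
  case (Cons c' cs)
  obtain \<beta> where b: "act_clique delta \<alpha> c' = Some \<beta>" "\<beta> \<in> X" "nfa \<beta> cs" using nfa_Cons[OF Cons.prems(1)] by auto
  show ?case
  proof (cases "(\<gamma>, c, i) \<in> set (NL \<beta> cs)")
    case True
    then obtain k where k: "k < length cs" "c = cs!k" "run delta (Some \<beta>) (cw (take k cs)) = Some \<gamma>" "1 \<le> i" "i \<le> card c"
      using Cons.IH b by blast
    have "run delta (Some \<alpha>) (cw (take (Suc k) (c'#cs))) = Some \<gamma>"
      using k b unfolding act_clique_def by (simp add: run_append)
    then show ?thesis using k by (intro exI[of _ "Suc k"]) auto
  next
    case False
    then have "(\<gamma>, c, i) \<in> set (map (\<lambda>i. (\<alpha>, c', i)) [1..<Suc (card c')])" using Cons.prems b by auto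
    then show ?thesis by (intro exI[of _ 0]) auto
  qed
qed

lemma DSC_node_of: "\<alpha> \<in> X \<Longrightarrow> c \<in> cliques Sig I \<Longrightarrow> act_clique delta \<alpha> c \<noteq> None \<Longrightarrow> (\<alpha>, c) \<in> DSC_nodes Sig I X delta"
  unfolding DSC_nodes_def by auto

lemma NL_nodes: "nfa \<alpha> cs \<Longrightarrow> set (NL \<alpha> cs) \<subseteq> ADSC_nodes Sig I X delta"
proof (induction cs arbitrary: \<alpha>)
  case Nil then show ?case by simp
next
  case (Cons c cs)
  obtain \<beta> where b: "act_clique delta \<alpha> c = Some \<beta>" "\<beta> \<in> X" "nfa \<beta> cs" "c \<in> cliques Sig I"
    using nfa_Cons[OF Cons.prems(1)] by auto
  have "\<alpha> \<in> X" using Cons.prems nfa_def by auto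
  then have "(\<alpha>, c) \<in> DSC_nodes Sig I X delta" using b DSC_node_of by auto
  then have "set (map (\<lambda>i. (\<alpha>, c, i)) [1..<Suc (card c)]) \<subseteq> ADSC_nodes Sig I X delta"
    unfolding ADSC_nodes_def by auto
  then show ?case using Cons.IH[OF b(3)] b by auto
qed

lemma block_succ: "successively (ADSC_arc Sig I X delta) (map (\<lambda>i. (\<alpha>, c, i)) [m..<n])"
  if "set (map (\<lambda>i. (\<alpha>, c, i)) [m..<n]) \<subseteq> ADSC_nodes Sig I X delta"
  using that
proof (induction n)
  case 0 then show ?case by simp
next
  case (Suc n)
  show ?case
  proof (cases "m \<le> n")
    case True
    have e: "map (\<lambda>i. (\<alpha>, c, i)) [m..<Suc n] = map (\<lambda>i. (\<alpha>, c, i)) [m..<n] @ [(\<alpha>, c, n)]" using True by simp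
    have sub: "set (map (\<lambda>i. (\<alpha>, c, i)) [m..<n]) \<subseteq> ADSC_nodes Sig I X delta"
      using Suc.prems e by (metis le_sup_iff set_append)
    have ih: "successively (ADSC_arc Sig I X delta) (map (\<lambda>i. (\<alpha>, c, i)) [m..<n])" using Suc.IH[OF sub] .
    show ?thesis
    proof (cases "m < n")
      case True
      have "last (map (\<lambda>i. (\<alpha>, c, i)) [m..<n]) = (\<alpha>, c, n - 1)" using True by (simp add: last_map)
      moreover have "(\<alpha>, c, n - 1) \<in> ADSC_nodes Sig I X delta" "(\<alpha>, c, n) \<in> ADSC_nodes Sig I X delta"
        using Suc.prems True e by auto
      ultimately have "ADSC_arc Sig I X delta (last (map (\<lambda>i. (\<alpha>, c, i)) [m..<n])) (\<alpha>, c, n)"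
        unfolding ADSC_arc_def using True by auto
      then show ?thesis unfolding e successively_append_iff using ih by auto
    next
      case False
      then show ?thesis using e True by auto
    qed
  next
    case False
    then show ?thesis by simp
  qed
qed

lemma NL_hd: "cs \<noteq> [] \<Longrightarrow> set cs \<subseteq> cliques Sig I \<Longrightarrow> hd (NL \<alpha> cs) = (\<alpha>, hd cs, 1)"
  using card_clique_pos by (cases cs) (auto simp: upt_rec)

lemma NL_walk: "nfa \<alpha> cs \<Longrightarrow> successively (ADSC_arc Sig I X delta) (NL \<alpha> cs)"
proof (induction cs arbitrary: \<alpha>)
  case Nil then show ?case by simp
next
  case (Cons c cs)
  obtain \<beta> where b: "act_clique delta \<alpha> c = Some \<beta>" "\<beta> \<in> X" "nfa \<beta> cs" "c \<in> cliques Sig I"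
    using nfa_Cons[OF Cons.prems(1)] by auto
  have nodes: "set (NL \<alpha> (c#cs)) \<subseteq> ADSC_nodes Sig I X delta" using NL_nodes[OF Cons.prems] .
  let ?B = "map (\<lambda>i. (\<alpha>, c, i)) [1..<Suc (card c)]"
  have "set ?B \<subseteq> set (NL \<alpha> (c#cs))" by (simp only: NL.simps set_append) blast
  then have s1: "successively (ADSC_arc Sig I X delta) ?B" using block_succ nodes by blast
  have s2: "successively (ADSC_arc Sig I X delta) (NL \<beta> cs)" using Cons.IH b by auto
  have cp: "0 < card c" using card_clique_pos b by auto
  have lastB: "last ?B = (\<alpha>, c, card c)" using cp by (simp add: last_map)
  have "ADSC_arc Sig I X delta (last ?B) (hd (NL \<beta> cs))" if ne: "cs \<noteq> []"
  proof -
    have cl: "set cs \<subseteq> cliques Sig I" using b nfa_def nfs_def by auto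
    have h: "hd (NL \<beta> cs) = (\<beta>, hd cs, 1)" using NL_hd[OF ne cl] .
    have "NL \<beta> cs \<noteq> []" using ne cl length_NL cw_empty_iff by (metis length_0_conv)
    then have m2: "(\<beta>, hd cs, 1) \<in> ADSC_nodes Sig I X delta" using nodes h b by (auto simp del: NL.simps)
      (metis NL_nodes b(3) hd_in_set h subsetD)
    have m1: "(\<alpha>, c, card c) \<in> ADSC_nodes Sig I X delta" using nodes cp by auto
    have ar: "clique_arrow Sig I c (hd cs)" using Cons.prems ne unfolding nfa_def nfs_Cons by auto
    have "DSC_arc Sig I X delta (\<alpha>, c) (\<beta>, hd cs)"
      using m1 m2 b ar unfolding DSC_arc_def ADSC_nodes_def by auto
    then show ?thesis unfolding h lastB ADSC_arc_def using m1 m2 by auto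
  qed
  then show ?case using s1 s2 b unfolding NL.simps successively_append_iff by (cases "cs = []") auto
qed

lemma walk_decomp:
  "p \<noteq> [] \<Longrightarrow> set p \<subseteq> ADSC_nodes Sig I X delta \<Longrightarrow> successively (ADSC_arc Sig I X delta) p \<Longrightarrow>
   \<exists>\<alpha> cs d. nfa \<alpha> cs \<and> cs \<noteq> [] \<and> d < card (hd cs) \<and> p = take (length p) (drop d (NL \<alpha> cs)) \<and>
     d + length p \<le> length (NL \<alpha> cs) \<and> length (NL \<alpha> cs) \<le> d + length p + card Sig"
proof (induction p)
  case Nil then show ?case by simp
next
  case (Cons v p)
  obtain \<alpha> c i where v: "v = (\<alpha>, c, i)" by (cases v) auto
  have vn: "(\<alpha>, c) \<in> DSC_nodes Sig I X delta" "1 \<le> i" "i \<le> card c"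
    using Cons.prems v unfolding ADSC_nodes_def by auto
  have al: "\<alpha> \<in> X" "c \<in> cliques Sig I" "act_clique delta \<alpha> c \<noteq> None" using vn(1) unfolding DSC_nodes_def by auto
  show ?case
  proof (cases "p = []")
    case True
    have nfa1: "nfa \<alpha> [c]" unfolding nfa_def nfs_def using al(1,2) al(3)[unfolded act_clique_def] by auto
    have "i - 1 < length (NL \<alpha> [c])" using vn by simp
    then have "take 1 (drop (i - 1) (NL \<alpha> [c])) = [NL \<alpha> [c] ! (i - 1)]" by (rule take1_drop)
    also have "NL \<alpha> [c] ! (i - 1) = (\<alpha>, c, i)" using NL_nth_first[of "i - 1" c \<alpha> "[]"] vn by simp
    finally have "v # p = take (length (v # p)) (drop (i - 1) (NL \<alpha> [c]))" using True v by simp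
    moreover have "length (NL \<alpha> [c]) = card c" by simp
    ultimately show ?thesis using nfa1 vn True card_clique_le[OF al(2)]
      by (intro exI[of _ \<alpha>] exI[of _ "[c]"] exI[of _ "i - 1"]) (simp del: NL.simps)
  next
    case False
    have pn: "set p \<subseteq> ADSC_nodes Sig I X delta" "successively (ADSC_arc Sig I X delta) p"
      and arc: "ADSC_arc Sig I X delta v (hd p)"
      using Cons.prems False by (auto simp: successively_Cons)
    obtain \<alpha>' cs d where ih: "nfa \<alpha>' cs" "cs \<noteq> []" "d < card (hd cs)"
      "p = take (length p) (drop d (NL \<alpha>' cs))" "d + length p \<le> length (NL \<alpha>' cs)"
      "length (NL \<alpha>' cs) \<le> d + length p + card Sig"
      using Cons.IH[OF False pn] by blast
    have pe: "take (length p) (drop d (NL \<alpha>' cs)) = p" using ih(4) by (rule sym)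
    obtain c' cs' where csc: "cs = c' # cs'" using ih(2) by (cases cs) auto
    have dl: "d < length (NL \<alpha>' cs)" using ih(5) False by (cases p) auto
    have hdp: "hd p = (\<alpha>', c', Suc d)"
    proof -
      have "hd p = hd (take (length p) (drop d (NL \<alpha>' cs)))" using pe by simp
      also have "\<dots> = drop d (NL \<alpha>' cs) ! 0" using False dl by (simp add: hd_conv_nth)
      also have "\<dots> = NL \<alpha>' cs ! d" using dl by simp
      also have "\<dots> = (\<alpha>', c', Suc d)" using NL_nth_first ih(3) csc by auto
      finally show ?thesis .
    qed
    have cases: "(\<alpha>' = \<alpha> \<and> c' = c \<and> Suc d = i + 1) \<or> (i = card c \<and> Suc d = 1 \<and> DSC_arc Sig I X delta (\<alpha>, c) (\<alpha>', c'))"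
      using arc unfolding ADSC_arc_def hdp v by auto
    then show ?thesis
    proof
      assume A: "\<alpha>' = \<alpha> \<and> c' = c \<and> Suc d = i + 1"
      then have d1: "1 \<le> d" using vn by auto
      have "drop (d - 1) (NL \<alpha>' cs) = NL \<alpha>' cs ! (d - 1) # drop d (NL \<alpha>' cs)"
        using Cons_nth_drop_Suc[of "d - 1" "NL \<alpha>' cs"] dl d1 by simp
      moreover have "NL \<alpha>' cs ! (d - 1) = v" using NL_nth_first[of "d - 1" c' \<alpha>' cs'] ih(3) csc A v d1 by auto
      ultimately have "v # p = take (length (v # p)) (drop (d - 1) (NL \<alpha>' cs))" using pe by simp
      then show ?thesis using ih(1,2,3,5,6) d1 csc
        by (intro exI[of _ \<alpha>'] exI[of _ cs] exI[of _ "d - 1"]) (simp del: NL.simps)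
    next
      assume B: "i = card c \<and> Suc d = 1 \<and> DSC_arc Sig I X delta (\<alpha>, c) (\<alpha>', c')"
      then have d0: "d = 0" and ac: "act_clique delta \<alpha> c = Some \<alpha>'" and ar: "clique_arrow Sig I c c'"
        unfolding DSC_arc_def by auto
      have nfs': "nfs cs" using ih(1) nfa_def by auto
      have nfa2: "nfa \<alpha> (c # cs)"
        unfolding nfa_def nfs_Cons using al nfs' ar csc ih(1) ac
        by (auto simp: nfa_def act_clique_def run_append)
      let ?B = "map (\<lambda>i. (\<alpha>, c, i)) [1..<Suc (card c)]"
      have cp: "0 < card c" using card_clique_pos al by auto
      have NLe: "NL \<alpha> (c # cs) = ?B @ NL \<alpha>' cs" using ac by simp
      have u: "[1..<Suc (card c)] = [1..<card c] @ [card c]" using cp by simp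
      have "drop (card c - 1) ?B = [(\<alpha>, c, card c)]" unfolding u by simp
      then have "drop (card c - 1) (NL \<alpha> (c # cs)) = v # NL \<alpha>' cs" unfolding NLe using B v by simp
      then have "v # p = take (length (v # p)) (drop (card c - 1) (NL \<alpha> (c # cs)))"
        using pe d0 by simp
      moreover have "length (NL \<alpha> (c # cs)) = card c + length (NL \<alpha>' cs)" using NLe by simp
      ultimately show ?thesis using ih(5,6) nfa2 d0 cp
        by (intro exI[of _ \<alpha>] exI[of _ "c # cs"] exI[of _ "card c - 1"]) (simp del: NL.simps)
    qed
  qed
qed
end


lemma sum_list_mono2: "length xs = length ys \<Longrightarrow> (\<And>k. k < length xs \<Longrightarrow> f (xs!k) \<le> (f (ys!k) :: nat)) \<Longrightarrow>
  sum_list (map f xs) \<le> sum_list (map f ys)"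
proof (induction xs ys rule: list_induct2)
  case Nil then show ?case by simp
next
  case (Cons x xs y ys)
  have "f x \<le> f y" using Cons.prems[of 0] by simp
  moreover have "sum_list (map f xs) \<le> sum_list (map f ys)" using Cons.IH Cons.prems[of "Suc _"] by auto
  ultimately show ?case by simp
qed

lemma card_factor: assumes "finite S" "\<And>x y. x \<in> S \<Longrightarrow> y \<in> S \<Longrightarrow> F x = F y \<Longrightarrow> G x = G y"
  shows "card (G ` S) \<le> card (F ` S)"
proof -
  define H where "H = (\<lambda>f. G (inv_into S F f))"
  have "G ` S = H ` (F ` S)"
  proof -
    have "G x = H (F x)" if "x \<in> S" for x
    proof -
      have "inv_into S F (F x) \<in> S" "F (inv_into S F (F x)) = F x"
        using that by (auto intro: inv_into_into f_inv_into_f)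
      then show ?thesis unfolding H_def using assms(2) that by metis
    qed
    then show ?thesis by (auto simp: image_iff)
  qed
  then show ?thesis using card_image_le assms(1) by (metis finite_imageI)
qed

context tm begin

lemma rounds_push:
  assumes us: "\<forall>u\<in>set us. set u \<subseteq> Sig \<and> Sig \<subseteq> set u"
    and h: "0 < length cs" and b0: "b0 \<in> cs ! (length cs - 1)" "b0 \<in> Sig"
    and m: "(b0, b) \<in> D ^^ m" "m < length us"
  shows "\<exists>k \<ge> length cs. k < length (foldl ins cs (concat us)) \<and> b \<in> foldl ins cs (concat us) ! k"
proof -
  let ?F = "\<lambda>j. foldl ins cs (concat (take j us))"
  have claim: "\<exists>k \<ge> length cs. k < length (?F (Suc m)) \<and> b \<in> ?F (Suc m) ! k"
    if "(b0, b) \<in> D ^^ m" "m < length us" for m b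
    using that
  proof (induction m arbitrary: b)
    case 0
    then have bb: "b = b0" by simp
    have t1: "take (Suc 0) us = [us!0]" using 0 by (cases us) auto
    have "b0 \<in> set (us!0)" using us b0 0 by (meson nth_mem subsetD)
    then obtain k where "k > length cs - 1" "k < length (?F 1)" "b0 \<in> ?F 1 ! k"
      using foldl_push[of b0 "us!0" "length cs - 1" cs b0] h b0 dep_refl t1 by auto
    then show ?case using bb by (intro exI[of _ k]) auto
  next
    case (Suc m)
    obtain c where c: "(b0, c) \<in> D ^^ m" "(c, b) \<in> D" using Suc.prems(1) by auto
    obtain k where k: "k \<ge> length cs" "k < length (?F (Suc m))" "c \<in> ?F (Suc m) ! k"
      using Suc.IH[OF c(1)] Suc.prems(2) by auto
    have tk: "take (Suc (Suc m)) us = take (Suc m) us @ [us ! Suc m]"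
      using Suc.prems(2) by (simp add: take_Suc_conv_app_nth)
    have F2: "?F (Suc (Suc m)) = foldl ins (?F (Suc m)) (us ! Suc m)" unfolding tk by simp
    have "b \<in> set (us ! Suc m)" using us c(2) Suc.prems(2) dep_iff by (meson nth_mem subsetD)
    then obtain k' where "k' > k" "k' < length (?F (Suc (Suc m)))" "b \<in> ?F (Suc (Suc m)) ! k'"
      using foldl_push[OF _ k(2) k(3) c(2)] F2 by auto
    then show ?case using k(1) by (intro exI[of _ k']) auto
  qed
  obtain k where k: "k \<ge> length cs" "k < length (?F (Suc m))" "b \<in> ?F (Suc m) ! k" using claim m by blast
  have "concat us = concat (take (Suc m) us) @ concat (drop (Suc m) us)"
    by (metis append_take_drop_id concat_append)
  then have "foldl ins cs (concat us) = foldl ins (?F (Suc m)) (concat (drop (Suc m) us))" by simp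
  then show ?thesis using foldl_mono[OF k(2)] k by auto
qed

definition cls :: "'a list \<Rightarrow> 'a list set" where "cls t = {v. trace_eq I t v}"

lemma cls_eq: "trace_eq I u v \<Longrightarrow> cls u = cls v"
  unfolding cls_def using trace_eq_sym trace_eq_trans by blast

lemma cls_eqD: "cls u = cls v \<Longrightarrow> trace_eq I u v"
  unfolding cls_def by auto

lemma finite_words_len: "finite {w. set w \<subseteq> Sig \<and> length w = n}"
  using finite_lists_length_eq[OF finSig] by simp

lemma letters_block: "c \<in> cliques Sig I \<Longrightarrow>
  map (\<lambda>(\<gamma>, c, i). clique_word c ! (i - 1)) (map (\<lambda>i. (\<alpha>, c, i)) [1..<Suc (card c)]) = clique_word c"
proof -
  assume c: "c \<in> cliques Sig I"
  have "[1..<Suc (card c)] = map Suc [0..<card c]" by (simp add: map_Suc_upt)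
  then have "map (\<lambda>(\<gamma>, c, i). clique_word c ! (i - 1)) (map (\<lambda>i. (\<alpha>, c, i)) [1..<Suc (card c)])
     = map (\<lambda>j. clique_word c ! j) [0..<length (clique_word c)]"
    using cw_length[OF c] by simp
  then show ?thesis by (simp add: map_nth)
qed

end

context csys begin

lemma irr_monoid: "Sig \<noteq> {}" "\<And>a b. a \<in> Sig \<Longrightarrow> b \<in> Sig \<Longrightarrow> (a, b) \<in> D\<^sup>*"
  using irr unfolding irreducible_system_def irreducible_monoid_def by auto

lemma acc: "\<alpha> \<in> X \<Longrightarrow> \<beta> \<in> X \<Longrightarrow> \<exists>w\<in>words Sig. run delta (Some \<alpha>) w = Some \<beta>"
  using irr unfolding irreducible_system_def accessible_def by auto

lemma alv: "\<alpha> \<in> X \<Longrightarrow> a \<in> Sig \<Longrightarrow> \<exists>w\<in>words Sig. a \<in> set w \<and> run delta (Some \<alpha>) w \<noteq> None"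
  using irr unfolding irreducible_system_def alive_def by auto

lemma run_SomeX: "\<alpha> \<in> X \<Longrightarrow> set w \<subseteq> Sig \<Longrightarrow> run delta (Some \<alpha>) w \<noteq> None \<Longrightarrow> \<exists>\<beta>\<in>X. run delta (Some \<alpha>) w = Some \<beta>"
  using run_X by (cases "run delta (Some \<alpha>) w") auto

lemma cover_word: "finite A \<Longrightarrow> A \<subseteq> Sig \<Longrightarrow> \<forall>\<gamma>\<in>X. \<exists>u. set u \<subseteq> Sig \<and> A \<subseteq> set u \<and> run delta (Some \<gamma>) u \<noteq> None"
proof (induction A rule: finite_induct)
  case empty then show ?case by (auto intro: exI[of _ "[]"])
next
  case (insert a A)
  show ?case
  proof
    fix \<gamma> assume g: "\<gamma> \<in> X"
    obtain w where w: "set w \<subseteq> Sig" "a \<in> set w" "run delta (Some \<gamma>) w \<noteq> None"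
      using alv[OF g, of a] insert.prems unfolding words_def by blast
    obtain \<gamma>' where g': "\<gamma>' \<in> X" "run delta (Some \<gamma>) w = Some \<gamma>'" using run_SomeX g w by blast
    obtain u where u: "set u \<subseteq> Sig" "A \<subseteq> set u" "run delta (Some \<gamma>') u \<noteq> None"
      using insert g' by auto
    show "\<exists>u. set u \<subseteq> Sig \<and> insert a A \<subseteq> set u \<and> run delta (Some \<gamma>) u \<noteq> None"
      using w u g' by (intro exI[of _ "w @ u"]) (auto simp: run_append)
  qed
qed

lemma rounds_exist: "\<gamma> \<in> X \<Longrightarrow> \<exists>us. length us = R \<and> (\<forall>u\<in>set us. set u \<subseteq> Sig \<and> Sig \<subseteq> set u) \<and>
   run delta (Some \<gamma>) (concat us) \<noteq> None"
proof (induction R arbitrary: \<gamma>)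
  case 0 then show ?case by simp
next
  case (Suc R)
  obtain u where u: "set u \<subseteq> Sig" "Sig \<subseteq> set u" "run delta (Some \<gamma>) u \<noteq> None"
    using cover_word[OF finSig] Suc.prems by blast
  obtain \<gamma>' where g': "\<gamma>' \<in> X" "run delta (Some \<gamma>) u = Some \<gamma>'" using run_SomeX Suc.prems u by blast
  obtain us where us: "length us = R" "\<forall>u\<in>set us. set u \<subseteq> Sig \<and> Sig \<subseteq> set u"
    "run delta (Some \<gamma>') (concat us) \<noteq> None" using Suc.IH g' by blast
  show ?case using u us g' by (intro exI[of _ "u # us"]) (auto simp: run_append)
qed

definition mdist :: "'a \<Rightarrow> 'a \<Rightarrow> nat" where "mdist a b = (SOME m. (a, b) \<in> D ^^ m)"

definition Rr :: nat where "Rr = Suc (Max ((\<lambda>(a,b). mdist a b) ` (Sig \<times> Sig)))"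

lemma mdist: "a \<in> Sig \<Longrightarrow> b \<in> Sig \<Longrightarrow> (a, b) \<in> D ^^ mdist a b \<and> mdist a b < Rr"
proof -
  assume ab: "a \<in> Sig" "b \<in> Sig"
  have "\<exists>m. (a, b) \<in> D ^^ m" using irr_monoid(2)[OF ab] rtrancl_power by blast
  then have "(a, b) \<in> D ^^ mdist a b" unfolding mdist_def by (rule someI_ex)
  moreover have "mdist a b \<le> Max ((\<lambda>(a,b). mdist a b) ` (Sig \<times> Sig))"
    using ab finSig by (intro Max_ge) (auto intro!: finite_imageI simp: image_iff)
  ultimately show ?thesis unfolding Rr_def by auto
qed

definition Wus :: "'x \<Rightarrow> 'a list list" where
  "Wus \<gamma> = (SOME us. length us = Rr \<and> (\<forall>u\<in>set us. set u \<subseteq> Sig \<and> Sig \<subseteq> set u) \<and>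
     run delta (Some \<gamma>) (concat us) \<noteq> None)"

definition Wd :: "'x \<Rightarrow> 'a list" where "Wd \<gamma> = concat (Wus \<gamma>)"

lemma Wus: "\<gamma> \<in> X \<Longrightarrow> length (Wus \<gamma>) = Rr \<and> (\<forall>u\<in>set (Wus \<gamma>). set u \<subseteq> Sig \<and> Sig \<subseteq> set u) \<and>
     run delta (Some \<gamma>) (Wd \<gamma>) \<noteq> None"
  unfolding Wd_def Wus_def by (rule someI_ex) (rule rounds_exist)

lemma Wd_words: "\<gamma> \<in> X \<Longrightarrow> set (Wd \<gamma>) \<subseteq> Sig"
  using Wus unfolding Wd_def by fastforce

definition LL :: nat where "LL = Max ((\<lambda>\<gamma>. length (Wd \<gamma>)) ` X)"

lemma Wd_len: "\<gamma> \<in> X \<Longrightarrow> length (Wd \<gamma>) \<le> LL"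
  unfolding LL_def using finX by (intro Max_ge) auto

lemma covered_beyond:
  assumes cs: "nfs cs" "0 < length cs" and g: "\<gamma> \<in> X"
  shows "\<forall>b\<in>Sig. \<exists>k \<ge> length cs. k < length (foldl ins cs (Wd \<gamma>)) \<and> b \<in> foldl ins cs (Wd \<gamma>) ! k"
proof
  fix b assume b: "b \<in> Sig"
  have cl: "cs ! (length cs - 1) \<in> cliques Sig I" using cs unfolding nfs_def by auto
  then obtain b0 where b0: "b0 \<in> cs ! (length cs - 1)" using clique_ne by blast
  then have b0S: "b0 \<in> Sig" using clique_sub cl by auto
  show "\<exists>k \<ge> length cs. k < length (foldl ins cs (Wd \<gamma>)) \<and> b \<in> foldl ins cs (Wd \<gamma>) ! k"
    using rounds_push[of "Wus \<gamma>" cs b0 b "mdist b0 b"] Wus[OF g] cs(2) b0 b0S mdist[OF b0S b]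
    unfolding Wd_def by auto
qed

end


context csys begin



definition Sset :: "nat \<Rightarrow> ('x \<times> 'x \<times> 'a list) set" where
  "Sset n = {(\<alpha>, \<beta>, t). \<alpha> \<in> X \<and> \<beta> \<in> X \<and> set t \<subseteq> Sig \<and> length t = n \<and> run delta (Some \<alpha>) t = Some \<beta>}"

definition TC :: "nat \<Rightarrow> ('x \<times> 'x \<times> 'a list set) set" where
  "TC n = (\<lambda>(\<alpha>, \<beta>, t). (\<alpha>, \<beta>, cls t)) ` Sset n"

definition T :: "nat \<Rightarrow> nat" where
  "T n = (\<Sum>\<alpha>\<in>X. \<Sum>\<beta>\<in>X. count_traces Sig I delta \<alpha> \<beta> n)"

lemma Sset_finite: "finite (Sset n)"
proof -
  have "Sset n \<subseteq> X \<times> X \<times> {w. set w \<subseteq> Sig \<and> length w = n}" unfolding Sset_def by auto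
  then show ?thesis by (rule finite_subset) (intro finite_cartesian_product finX finite_words_len)
qed

lemma T_card: "T n = card (TC n)"
proof -
  let ?C = "\<lambda>\<alpha> \<beta>. (\<lambda>w. {v. trace_eq I w v}) ` {w \<in> words Sig. length w = n \<and> run delta (Some \<alpha>) w = Some \<beta>}"
  have fin: "finite (?C \<alpha> \<beta>)" for \<alpha> \<beta>
    by (rule finite_imageI, rule finite_subset[OF _ finite_words_len[of n]]) (auto simp: words_def)
  have "TC n = Sigma X (\<lambda>\<alpha>. Sigma X (\<lambda>\<beta>. ?C \<alpha> \<beta>))"
  proof
    show "TC n \<subseteq> Sigma X (\<lambda>\<alpha>. Sigma X (\<lambda>\<beta>. ?C \<alpha> \<beta>))"
    proof
      fix z assume "z \<in> TC n"
      then obtain \<alpha> \<beta> t where z: "z = (\<alpha>, \<beta>, cls t)" "(\<alpha>, \<beta>, t) \<in> Sset n"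
        unfolding TC_def by auto
      then have "t \<in> {w \<in> words Sig. length w = n \<and> run delta (Some \<alpha>) w = Some \<beta>}" "\<alpha> \<in> X" "\<beta> \<in> X"
        unfolding Sset_def words_def by auto
      then show "z \<in> Sigma X (\<lambda>\<alpha>. Sigma X (\<lambda>\<beta>. ?C \<alpha> \<beta>))" unfolding z cls_def by blast
    qed
  next
    show "Sigma X (\<lambda>\<alpha>. Sigma X (\<lambda>\<beta>. ?C \<alpha> \<beta>)) \<subseteq> TC n"
    proof
      fix z assume "z \<in> Sigma X (\<lambda>\<alpha>. Sigma X (\<lambda>\<beta>. ?C \<alpha> \<beta>))"
      then obtain \<alpha> \<beta> t where z: "z = (\<alpha>, \<beta>, {v. trace_eq I t v})" "\<alpha> \<in> X" "\<beta> \<in> X"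
        "t \<in> {w \<in> words Sig. length w = n \<and> run delta (Some \<alpha>) w = Some \<beta>}" by blast
      then have "(\<alpha>, \<beta>, t) \<in> Sset n" unfolding Sset_def words_def by auto
      moreover have "z = (\<lambda>(\<alpha>, \<beta>, t). (\<alpha>, \<beta>, cls t)) (\<alpha>, \<beta>, t)" using z cls_def by simp
      ultimately show "z \<in> TC n" unfolding TC_def by blast
    qed
  qed
  then have "card (TC n) = (\<Sum>\<alpha>\<in>X. card (Sigma X (\<lambda>\<beta>. ?C \<alpha> \<beta>)))"
    using finX fin by (simp add: card_SigmaI)
  also have "\<dots> = (\<Sum>\<alpha>\<in>X. \<Sum>\<beta>\<in>X. card (?C \<alpha> \<beta>))"
    using finX fin by (simp add: card_SigmaI)
  finally show ?thesis unfolding T_def count_traces_def by simp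
qed

lemma TC_finite: "finite (TC n)" unfolding TC_def using Sset_finite by auto


end


context csys begin

definition Data :: "nat \<Rightarrow> ('x \<times> 'a set list \<times> nat) set" where
  "Data n = {(\<alpha>, cs, d). nfa \<alpha> cs \<and> cs \<noteq> [] \<and> d < card Sig \<and> n \<le> length (cw cs) \<and> length (cw cs) \<le> n + 2 * card Sig}"

lemma length_le_cw: "set cs \<subseteq> cliques Sig I \<Longrightarrow> length cs \<le> length (cw cs)"
proof (induction cs)
  case Nil then show ?case by simp
next
  case (Cons c cs)
  then show ?case using card_clique_pos[of c] cw_length[of c] by auto
qed

lemma Data_finite: "finite (Data n)"
proof -
  have "Data n \<subseteq> X \<times> {cs. set cs \<subseteq> Pow Sig \<and> length cs \<le> n + 2 * card Sig} \<times> {..<card Sig}"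
    unfolding Data_def nfa_def nfs_def using clique_sub length_le_cw by fastforce
  moreover have "finite {cs. set cs \<subseteq> Pow Sig \<and> length cs \<le> n + 2 * card Sig}"
    using finite_lists_length_le[of "Pow Sig"] finSig by auto
  ultimately show ?thesis using finX finite_subset by blast
qed


end


context csys begin

lemma walks_ADSC_bound: assumes "0 < n"
  shows "card (walks (ADSC_nodes Sig I X delta) (ADSC_arc Sig I X delta) n)
          \<le> card Sig * (\<Sum>m\<in>{n..n + 2 * card Sig}. T m)"
proof -
  let ?W = "walks (ADSC_nodes Sig I X delta) (ADSC_arc Sig I X delta) n"
  have sub: "?W \<subseteq> (\<lambda>(\<alpha>, cs, d). take n (drop d (NL \<alpha> cs))) ` Data n"
  proof
    fix p assume "p \<in> ?W"
    then have p: "length p = n" "set p \<subseteq> ADSC_nodes Sig I X delta" "successively (ADSC_arc Sig I X delta) p"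
      unfolding walks_def by auto
    then have "p \<noteq> []" using assms by auto
    then obtain \<alpha> cs d where dd: "nfa \<alpha> cs" "cs \<noteq> []" "d < card (hd cs)" "p = take (length p) (drop d (NL \<alpha> cs))"
      "d + length p \<le> length (NL \<alpha> cs)" "length (NL \<alpha> cs) \<le> d + length p + card Sig"
      using walk_decomp p by blast
    have cl: "set cs \<subseteq> cliques Sig I" using dd(1) nfa_def nfs_def by auto
    have "card (hd cs) \<le> card Sig" using card_clique_le cl dd(2) hd_in_set by blast
    then have "(\<alpha>, cs, d) \<in> Data n" unfolding Data_def using dd p(1) length_NL[OF cl] by auto
    then show "p \<in> (\<lambda>(\<alpha>, cs, d). take n (drop d (NL \<alpha> cs))) ` Data n"
      using dd(4) p(1) by (auto simp: image_iff intro!: bexI[of _ "(\<alpha>, cs, d)"])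
  qed
  have "card ((\<lambda>(\<alpha>, cs, d). take n (drop d (NL \<alpha> cs))) ` Data n) \<le> card (Data n)"
    by (rule card_image_le[OF Data_finite])
  then have c1: "card ?W \<le> card (Data n)"
    using card_mono[OF finite_imageI[OF Data_finite] sub] by linarith
  define G where "G = (\<lambda>(\<alpha>, cs, d::nat). (d, (\<alpha>, the (run delta (Some \<alpha>) (cw cs)), cls (cw cs))))"
  have inj: "inj_on G (Data n)"
  proof (rule inj_onI)
    fix x y assume x: "x \<in> Data n" and y: "y \<in> Data n" and e: "G x = G y"
    obtain \<alpha> cs d where xx: "x = (\<alpha>, cs, d)" by (cases x) auto
    obtain \<alpha>' cs' d' where yy: "y = (\<alpha>', cs', d')" by (cases y) auto
    have "cls (cw cs) = cls (cw cs')" "d = d'" "\<alpha> = \<alpha>'" using e xx yy G_def by auto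
    moreover have "nfs cs" "nfs cs'" using x y xx yy Data_def nfa_def by auto
    ultimately show "x = y" using nf_unique cls_eqD xx yy by metis
  qed
  have sub2: "G ` Data n \<subseteq> {..<card Sig} \<times> (\<Union>m\<in>{n..n + 2 * card Sig}. TC m)"
  proof
    fix z assume "z \<in> G ` Data n"
    then obtain \<alpha> cs d where x: "(\<alpha>, cs, d) \<in> Data n" and z: "z = G (\<alpha>, cs, d)" by auto
    have n: "nfa \<alpha> cs" using x Data_def by auto
    then have cl: "set cs \<subseteq> cliques Sig I" "\<alpha> \<in> X" using nfa_def nfs_def by auto
    obtain \<beta> where b: "\<beta> \<in> X" "run delta (Some \<alpha>) (cw cs) = Some \<beta>"
      using run_SomeX cl cw_words n nfa_def by metis
    have "(\<alpha>, \<beta>, cw cs) \<in> Sset (length (cw cs))" unfolding Sset_def using cl b cw_words by auto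
    then have "(\<alpha>, \<beta>, cls (cw cs)) \<in> TC (length (cw cs))" unfolding TC_def by force
    then show "z \<in> {..<card Sig} \<times> (\<Union>m\<in>{n..n + 2 * card Sig}. TC m)"
      using x z b unfolding G_def Data_def by auto
  qed
  have "card (Data n) = card (G ` Data n)" using card_image[OF inj] by simp
  also have "\<dots> \<le> card ({..<card Sig} \<times> (\<Union>m\<in>{n..n + 2 * card Sig}. TC m))"
    by (rule card_mono[OF _ sub2]) (auto intro: TC_finite)
  also have "\<dots> = card Sig * card (\<Union>m\<in>{n..n + 2 * card Sig}. TC m)"
    by (simp add: card_cartesian_product)
  also have "\<dots> \<le> card Sig * (\<Sum>m\<in>{n..n + 2 * card Sig}. card (TC m))"
    using card_UN_le[of "{n..n + 2 * card Sig}" TC] by (intro mult_le_mono2) auto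
  finally show ?thesis using c1 T_card by simp
qed


end


context csys begin

lemma T_pos: "1 \<le> T n"
proof -
  obtain \<alpha>0 a \<beta>0 where a: "\<alpha>0 \<in> X" "a \<in> Sig" "delta \<alpha>0 a = Some \<beta>0"
    using ntriv unfolding non_trivial_def by auto
  have b0: "\<beta>0 \<in> X" using delta_X a by auto
  obtain u where u: "set u \<subseteq> Sig" "run delta (Some \<beta>0) u = Some \<alpha>0" using acc[OF b0 a(1)] unfolding words_def by auto
  define l where "l = a # u"
  have l: "run delta (Some \<alpha>0) l = Some \<alpha>0" "set l \<subseteq> Sig" "1 \<le> length l" using a u l_def by auto
  have rl: "run delta (Some \<alpha>0) (concat (replicate k l)) = Some \<alpha>0" for k
    by (induction k) (auto simp: run_append l)
  have len: "length (concat (replicate k l)) = k * length l" for k by (induction k) auto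
  let ?w = "concat (replicate n l)"
  have "n \<le> length ?w" using len l(3) by (metis mult_le_mono2 nat_mult_1_right)
  then have tw: "length (take n ?w) = n" by simp
  have "set ?w \<subseteq> set l" by (cases n) auto
  then have sw: "set (take n ?w) \<subseteq> Sig" using l(2) set_take_subset[of n ?w] by (meson subset_trans)
  have "run delta (Some \<alpha>0) (take n ?w) \<noteq> None"
    using run_prefix[of delta "Some \<alpha>0" "take n ?w" "drop n ?w"] rl by simp
  then obtain \<beta> where b: "\<beta> \<in> X" "run delta (Some \<alpha>0) (take n ?w) = Some \<beta>" using run_SomeX a sw by blast
  then have "(\<alpha>0, \<beta>, take n ?w) \<in> Sset n" unfolding Sset_def using a tw sw by auto
  then have "TC n \<noteq> {}" unfolding TC_def by auto
  then show ?thesis using T_card TC_finite by (simp add: Suc_le_eq card_gt_0_iff)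
qed


end


context csys begin

lemma pos_node:
  assumes cs: "nfs cs" and a: "\<alpha> \<in> X" and r: "run delta (Some \<alpha>) (cw cs) \<noteq> None"
    and k: "k < length cs" and cov: "\<forall>b\<in>Sig. \<exists>j>k. j < length cs \<and> b \<in> cs!j"
    and g: "run delta (Some \<alpha>) (cw (take k cs)) = Some \<gamma>"
  shows "positive_node Sig I X delta \<gamma> (cs!k)"
proof -
  have cl: "set cs \<subseteq> cliques Sig I" using cs nfs_def by auto
  have cld: "set (drop k cs) \<subseteq> cliques Sig I" using cl by (auto dest: in_set_dropD)
  have clt: "set (take k cs) \<subseteq> cliques Sig I" using cl by (auto dest: in_set_takeD)
  let ?x = "cw (drop k cs)"
  have split: "cw cs = cw (take k cs) @ ?x" by (metis append_take_drop_id cw_simps(3))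
  have rx: "run delta (Some \<gamma>) ?x = run delta (Some \<alpha>) (cw cs)" unfolding split by (simp add: run_append g)
  have xM: "?x \<in> M_at Sig delta \<gamma>" unfolding M_at_def words_def using cw_words[OF cld] rx r by auto
  have dne: "drop k cs \<noteq> []" using k by simp
  have xne: "?x \<noteq> []" using cw_empty_iff[OF cld] dne by auto
  have nd: "nfs (drop k cs)" using nfs_drop cs by auto
  have covd: "covered (drop k cs)" unfolding covered_def
  proof
    fix b assume "b \<in> Sig"
    then obtain j where j: "j > k" "j < length cs" "b \<in> cs!j" using cov by auto
    then show "\<exists>j. 1 \<le> j \<and> j < length (drop k cs) \<and> b \<in> drop k cs ! j"
      by (intro exI[of _ "j - k"]) auto
  qed
  have "\<forall>y\<in>M_at Sig delta (the (run delta (Some \<gamma>) ?x)). ?x @ y \<noteq> [] \<and> first_clique_is Sig I (?x @ y) (cs!k)"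
  proof
    fix y assume "y \<in> M_at Sig delta (the (run delta (Some \<gamma>) ?x))"
    then have y: "set y \<subseteq> Sig" unfolding M_at_def words_def by auto
    let ?c2 = "foldl ins (drop k cs) y"
    have n2: "nfs ?c2 \<and> trace_eq I (cw ?c2) (cw (drop k cs) @ y)" using foldl_ins[OF nd y] .
    have l2: "length (drop k cs) \<le> length ?c2" by (rule foldl_length)
    then have ne2: "?c2 \<noteq> []" using dne by auto
    have "?c2 ! 0 = drop k cs ! 0" using covered_foldl[OF covd y] by auto
    then have "hd ?c2 = cs ! k" using ne2 k by (simp add: hd_conv_nth)
    then have "first_clique_is Sig I (?x @ y) (cs!k)"
      unfolding first_clique_is_def is_nf_iff using n2 ne2 by blast
    then show "?x @ y \<noteq> [] \<and> first_clique_is Sig I (?x @ y) (cs!k)" using xne by auto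
  qed
  then show ?thesis unfolding positive_node_def using xM by blast
qed

abbreviation PN where "PN \<equiv> ADSC_pos_nodes Sig I X delta"
abbreviation PE where "PE \<equiv> (\<lambda>u v. ADSC_arc Sig I X delta u v \<and> u \<in> PN \<and> v \<in> PN)"

definition Qset :: "'a list set" where "Qset = {Q. set Q \<subseteq> Sig \<and> length Q \<le> LL}"

lemma Qset_finite: "finite Qset" unfolding Qset_def using finite_lists_length_le[OF finSig] by simp

definition lt :: "'x \<times> 'a set \<times> nat \<Rightarrow> 'a" where "lt = (\<lambda>(\<gamma>, c, i). clique_word c ! (i - 1))"

lemma NL_letters: "set cs \<subseteq> cliques Sig I \<Longrightarrow> map lt (NL \<alpha> cs) = cw cs"
proof (induction cs arbitrary: \<alpha>)
  case Nil then show ?case by simp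
next
  case (Cons c cs)
  then show ?case using letters_block[of c \<alpha>] unfolding lt_def by simp
qed

definition Fm :: "'x \<times> 'x \<times> 'a list \<Rightarrow> ('x \<times> 'a set \<times> nat) list \<times> 'x \<times> 'x \<times> 'a list" where
  "Fm = (\<lambda>(\<alpha>, \<beta>, t). (NL \<alpha> (take (length (nf t)) (foldl ins (nf t) (Wd \<beta>))), \<alpha>, \<beta>,
                    cw (drop (length (nf t)) (foldl ins (nf t) (Wd \<beta>)))))"

lemma Fm_props:
  assumes S: "(\<alpha>, \<beta>, t) \<in> Sset n" and n: "0 < n"
  defines "cs \<equiv> foldl ins (nf t) (Wd \<beta>)" and "h \<equiv> length (nf t)"
  shows "NL \<alpha> (take h cs) \<in> walks PN PE (length (NL \<alpha> (take h cs)))"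
    "n \<le> length (NL \<alpha> (take h cs))" "length (NL \<alpha> (take h cs)) \<le> n + LL"
    "cw (drop h cs) \<in> Qset"
    "trace_eq I (cw cs) (t @ Wd \<beta>)"
    "map lt (NL \<alpha> (take h cs)) @ cw (drop h cs) = cw cs"
proof -
  have a: "\<alpha> \<in> X" "\<beta> \<in> X" "set t \<subseteq> Sig" "length t = n" "run delta (Some \<alpha>) t = Some \<beta>"
    using S Sset_def by auto
  have nf0: "nfs (nf t)" "trace_eq I (cw (nf t)) t" using nf_props a(3) by auto
  have cl0: "set (nf t) \<subseteq> cliques Sig I" using nf0 nfs_def by auto
  have wS: "set (Wd \<beta>) \<subseteq> Sig" using Wd_words a(2) .
  have fl: "nfs cs" "trace_eq I (cw cs) (cw (nf t) @ Wd \<beta>)" using foldl_ins[OF nf0(1) wS] cs_def by auto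
  show te: "trace_eq I (cw cs) (t @ Wd \<beta>)"
    using fl(2) trace_eq_app_right[OF nf0(2)] trace_eq_trans by blast
  have cl: "set cs \<subseteq> cliques Sig I" using fl nfs_def by auto
  have clt: "set (take h cs) \<subseteq> cliques Sig I" using cl by (auto dest: in_set_takeD)
  have cld: "set (drop h cs) \<subseteq> cliques Sig I" using cl by (auto dest: in_set_dropD)
  have split: "cw cs = cw (take h cs) @ cw (drop h cs)" by (metis append_take_drop_id cw_simps(3))
  have rcs: "run delta (Some \<alpha>) (cw cs) = run delta (Some \<beta>) (Wd \<beta>)"
    using run_trace_eq[OF te a(1)] cw_words[OF cl] a by (simp add: run_append)
  then have rne: "run delta (Some \<alpha>) (cw cs) \<noteq> None" using Wus[OF a(2)] by auto
  have lencs: "length (cw cs) = n + length (Wd \<beta>)" using trace_eq_length[OF te] a by simp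
  have hpos: "0 < h" unfolding h_def using trace_eq_length[OF nf0(2)] a n by (cases "nf t") auto
  have hle: "h \<le> length cs" unfolding h_def cs_def by (rule foldl_length)
  have sub: "\<And>k. k < h \<Longrightarrow> nf t ! k \<subseteq> cs ! k" unfolding cs_def h_def using foldl_mono by blast
  have beyond: "\<forall>b\<in>Sig. \<exists>k \<ge> h. k < length cs \<and> b \<in> cs ! k"
    using covered_beyond[OF nf0(1) _ a(2)] hpos unfolding h_def cs_def by auto
  have nfat: "nfa \<alpha> (take h cs)"
    unfolding nfa_def using a(1) nfs_take[OF fl(1)] rne split run_prefix by metis
  let ?P = "NL \<alpha> (take h cs)"
  have lenP: "length ?P = length (cw (take h cs))" using length_NL[OF clt] .
  have "sum_list (map card (nf t)) \<le> sum_list (map card (take h cs))"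
  proof (rule sum_list_mono2)
    show "length (nf t) = length (take h cs)" using hle h_def by simp
    fix k assume "k < length (nf t)"
    then have "k < h" using h_def by simp
    moreover have "finite (cs ! k)" using cl hle \<open>k < h\<close> cliques_finite by (meson less_le_trans nth_mem subsetD)
    ultimately show "card (nf t ! k) \<le> card (take h cs ! k)" using card_mono[OF _ sub] by simp
  qed
  then have "length (cw (nf t)) \<le> length (cw (take h cs))" using length_cw cl0 clt by simp
  then show "n \<le> length ?P" using lenP trace_eq_length[OF nf0(2)] a by simp
  then have lQ: "length (cw (drop h cs)) \<le> length (Wd \<beta>)" using lencs split lenP by simp
  show "length ?P \<le> n + LL" using lenP lencs split Wd_len[OF a(2)] by simp
  show "cw (drop h cs) \<in> Qset" unfolding Qset_def using cw_words[OF cld] lQ Wd_len[OF a(2)] by simp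
  show "map lt ?P @ cw (drop h cs) = cw cs" using NL_letters[OF clt] split by simp
  have nodes: "set ?P \<subseteq> PN"
  proof
    fix v assume v: "v \<in> set ?P"
    obtain \<gamma> c i where vv: "v = (\<gamma>, c, i)" by (cases v) auto
    obtain k where k: "k < length (take h cs)" "c = take h cs ! k" "run delta (Some \<alpha>) (cw (take k (take h cs))) = Some \<gamma>"
      using NL_set[OF nfat] v vv by blast
    have kh: "k < h" "k < length cs" using k by auto
    have "positive_node Sig I X delta \<gamma> (cs ! k)"
    proof (rule pos_node[OF fl(1) a(1) rne kh(2)])
      show "\<forall>b\<in>Sig. \<exists>j>k. j < length cs \<and> b \<in> cs ! j"
      proof
        fix b assume "b \<in> Sig"
        then obtain j where "j \<ge> h" "j < length cs" "b \<in> cs ! j" using beyond by blast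
        then show "\<exists>j>k. j < length cs \<and> b \<in> cs ! j" using kh(1) by (intro exI[of _ j]) auto
      qed
      show "run delta (Some \<alpha>) (cw (take k cs)) = Some \<gamma>" using k kh by (simp add: min_def)
    qed
    moreover have "v \<in> ADSC_nodes Sig I X delta" using NL_nodes[OF nfat] v by auto
    ultimately show "v \<in> PN" unfolding ADSC_pos_nodes_def vv using k kh by auto
  qed
  have "successively (ADSC_arc Sig I X delta) ?P" using NL_walk[OF nfat] .
  then have "successively PE ?P" by (rule successively_mono) (use nodes in auto)
  then show "?P \<in> walks PN PE (length ?P)" unfolding walks_def using nodes by auto
qed

lemma walks_pos_bound: assumes "0 < n"
  shows "T n \<le> card X * card X * card Qset * (\<Sum>m\<in>{n..n + LL}. card (walks PN PE m))"
proof -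
  define G where "G = (\<lambda>(\<alpha>::'x, \<beta>::'x, t). (\<alpha>, \<beta>, cls t))"
  have TC: "TC n = G ` Sset n" unfolding TC_def G_def by simp
  have fact: "G x = G y" if x: "x \<in> Sset n" and y: "y \<in> Sset n" and e: "Fm x = Fm y" for x y
  proof -
    obtain \<alpha> \<beta> t where xx: "x = (\<alpha>, \<beta>, t)" by (cases x) auto
    obtain \<alpha>' \<beta>' t' where yy: "y = (\<alpha>', \<beta>', t')" by (cases y) auto
    have ab: "\<alpha>' = \<alpha>" "\<beta>' = \<beta>" using e xx yy Fm_def by auto
    let ?cs = "foldl ins (nf t) (Wd \<beta>)" and ?cs' = "foldl ins (nf t') (Wd \<beta>)"
    have p1: "trace_eq I (cw ?cs) (t @ Wd \<beta>)" "map lt (NL \<alpha> (take (length (nf t)) ?cs)) @ cw (drop (length (nf t)) ?cs) = cw ?cs"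
      using Fm_props[OF x[unfolded xx] assms] by auto
    have p2: "trace_eq I (cw ?cs') (t' @ Wd \<beta>)" "map lt (NL \<alpha> (take (length (nf t')) ?cs')) @ cw (drop (length (nf t')) ?cs') = cw ?cs'"
      using Fm_props[OF y[unfolded yy ab] assms] by auto
    have "NL \<alpha> (take (length (nf t)) ?cs) = NL \<alpha> (take (length (nf t')) ?cs')"
       "cw (drop (length (nf t)) ?cs) = cw (drop (length (nf t')) ?cs')"
      using e xx yy ab unfolding Fm_def by auto
    then have "cw ?cs = cw ?cs'" using p1(2) p2(2) by metis
    then have "trace_eq I (t @ Wd \<beta>) (t' @ Wd \<beta>)" using p1(1) p2(1) trace_eq_sym trace_eq_trans by metis
    then have "cls t = cls t'" using cancel_right cls_eq by blast
    then show ?thesis unfolding G_def xx yy ab by simp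
  qed
  have "T n = card (G ` Sset n)" using T_card TC by simp
  also have "\<dots> \<le> card (Fm ` Sset n)" by (rule card_factor[OF Sset_finite fact])
  also have "\<dots> \<le> card ((\<Union>m\<in>{n..n + LL}. walks PN PE m) \<times> X \<times> X \<times> Qset)"
  proof (rule card_mono)
    have "finite (walks PN PE m)" for m
    proof -
      have "walks PN PE m \<subseteq> {p. set p \<subseteq> ADSC_nodes Sig I X delta \<and> length p = m}"
        unfolding walks_def ADSC_pos_nodes_def by auto
      moreover have fa: "finite (ADSC_nodes Sig I X delta)"
      proof -
        have "ADSC_nodes Sig I X delta \<subseteq> X \<times> Pow Sig \<times> {..card Sig}"
          unfolding ADSC_nodes_def DSC_nodes_def using clique_sub card_clique_le by fastforce
        then show ?thesis by (rule finite_subset) (intro finite_cartesian_product finX finSig finite_Pow_iff[THEN iffD2] finite_atMost)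
      qed
      ultimately show ?thesis using finite_subset[OF _ finite_lists_length_eq[OF fa]] by blast
    qed
    then show "finite ((\<Union>m\<in>{n..n + LL}. walks PN PE m) \<times> X \<times> X \<times> Qset)"
      using finX Qset_finite by auto
    show "Fm ` Sset n \<subseteq> (\<Union>m\<in>{n..n + LL}. walks PN PE m) \<times> X \<times> X \<times> Qset"
    proof
      fix z assume "z \<in> Fm ` Sset n"
      then obtain \<alpha> \<beta> t where x: "(\<alpha>, \<beta>, t) \<in> Sset n" and z: "z = Fm (\<alpha>, \<beta>, t)" by auto
      have ab: "\<alpha> \<in> X" "\<beta> \<in> X" using x Sset_def by auto
      note pr = Fm_props[OF x assms]
      show "z \<in> (\<Union>m\<in>{n..n + LL}. walks PN PE m) \<times> X \<times> X \<times> Qset"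
        unfolding z Fm_def using pr ab by auto
    qed
  qed
  also have "\<dots> = card (\<Union>m\<in>{n..n + LL}. walks PN PE m) * card X * card X * card Qset"
    by (simp add: card_cartesian_product)
  also have "\<dots> \<le> (\<Sum>m\<in>{n..n + LL}. card (walks PN PE m)) * card X * card X * card Qset"
    using card_UN_le[of "{n..n + LL}" "walks PN PE"] by (intro mult_le_mono1) auto
  finally show ?thesis by (simp add: ac_simps)
qed

end


lemma smult_pow_mat: assumes A: "A \<in> carrier_mat n n"
  shows "(c \<cdot>\<^sub>m A) ^\<^sub>m k = (c ^ k) \<cdot>\<^sub>m (A ^\<^sub>m k :: 'a :: comm_ring_1 mat)"
proof (induction k)
  case 0
  then show ?case using A by (auto intro!: eq_matI)
next
  case (Suc k)
  have "(c \<cdot>\<^sub>m A) ^\<^sub>m Suc k = (c ^ k \<cdot>\<^sub>m A ^\<^sub>m k) * (c \<cdot>\<^sub>m A)" using Suc by simp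
  also have "\<dots> = c ^ k \<cdot>\<^sub>m (A ^\<^sub>m k * (c \<cdot>\<^sub>m A))"
    using A by (intro mult_smult_assoc_mat) auto
  also have "\<dots> = c ^ k \<cdot>\<^sub>m (c \<cdot>\<^sub>m (A ^\<^sub>m k * A))"
    using A by (subst mult_smult_distrib) auto
  also have "\<dots> = c ^ Suc k \<cdot>\<^sub>m (A ^\<^sub>m Suc k)"
    by (auto intro!: eq_matI simp: ac_simps)
  finally show ?case .
qed

lemma sr_lower:
  fixes A :: "complex mat"
  assumes A: "A \<in> carrier_mat n n" and n: "0 < n"
  shows "spectral_radius A ^ k \<le> (\<Sum>i<n. \<Sum>j<n. cmod ((A ^\<^sub>m k) $$ (i, j)))"
proof -
  obtain ev where ev: "ev \<in> spectrum A" "cmod ev = spectral_radius A"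
    using spectral_radius_mem_max(1)[OF A n] by auto
  then obtain v where v: "eigenvector A v ev" unfolding spectrum_def eigenvalue_def by auto
  have vc: "v \<in> carrier_vec n" "v \<noteq> 0\<^sub>v n" using v A unfolding eigenvector_def by auto
  have pw: "A ^\<^sub>m k *\<^sub>v v = ev ^ k \<cdot>\<^sub>v v" using eigenvector_pow[OF A v] .
  define M where "M = Max ((\<lambda>i. cmod (v $ i)) ` {..<n})"
  have "M \<in> (\<lambda>i. cmod (v $ i)) ` {..<n}" unfolding M_def using n by (intro Max_in) auto
  then obtain i0 where i0: "i0 < n" "cmod (v $ i0) = M" by auto
  have Mge: "cmod (v $ i) \<le> M" if "i < n" for i unfolding M_def using that by (intro Max_ge) auto
  have "\<exists>i<n. v $ i \<noteq> 0" using vc by (metis carrier_vecD eq_vecI index_zero_vec(1) index_zero_vec(2))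
  then obtain i1 where "i1 < n" "v $ i1 \<noteq> 0" by auto
  then have Mpos: "0 < M" using Mge[of i1] by (meson norm_le_zero_iff not_le order.strict_trans1 zero_less_norm_iff)
  have "spectral_radius A ^ k * M = cmod ((A ^\<^sub>m k *\<^sub>v v) $ i0)"
    using pw i0 vc ev(2) by (simp add: norm_mult norm_power)
  also have "(A ^\<^sub>m k *\<^sub>v v) $ i0 = (\<Sum>j<n. (A ^\<^sub>m k) $$ (i0, j) * v $ j)"
    using i0 A vc by (simp add: scalar_prod_def lessThan_atLeast0)
  also have "cmod \<dots> \<le> (\<Sum>j<n. cmod ((A ^\<^sub>m k) $$ (i0, j)) * M)"
    by (rule order.trans[OF norm_sum sum_mono]) (auto simp: norm_mult intro!: mult_left_mono Mge)
  also have "\<dots> = (\<Sum>j<n. cmod ((A ^\<^sub>m k) $$ (i0, j))) * M" by (simp add: sum_distrib_right)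
  finally have "spectral_radius A ^ k \<le> (\<Sum>j<n. cmod ((A ^\<^sub>m k) $$ (i0, j)))" using Mpos by simp
  also have "\<dots> \<le> (\<Sum>i<n. \<Sum>j<n. cmod ((A ^\<^sub>m k) $$ (i, j)))"
    using i0 by (intro member_le_sum) (auto intro: sum_nonneg)
  finally show ?thesis .
qed

lemma sr_upper:
  fixes A :: "complex mat"
  assumes A: "A \<in> carrier_mat n n" and s: "spectral_radius A < s"
  shows "\<exists>C. \<forall>k i j. i < n \<longrightarrow> j < n \<longrightarrow> cmod ((A ^\<^sub>m k) $$ (i, j)) \<le> C * s ^ k"
proof (cases "n = 0")
  case True then show ?thesis by auto
next
  case False
  then have n: "0 < n" by auto
  have sp: "0 < s" using s spectral_radius_mem_max(1)[OF A n] by (smt (verit) imageE norm_ge_zero)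
  define B where "B = (complex_of_real (1 / s)) \<cdot>\<^sub>m A"
  have B: "B \<in> carrier_mat n n" using A B_def by auto
  have "spectral_radius B < 1"
  proof -
    obtain mu where mu: "mu \<in> spectrum B" "cmod mu = spectral_radius B"
      using spectral_radius_mem_max(1)[OF B n] by auto
    then obtain v where v: "eigenvector B v mu" unfolding spectrum_def eigenvalue_def by auto
    have vc: "v \<in> carrier_vec n" "v \<noteq> 0\<^sub>v n" "B *\<^sub>v v = mu \<cdot>\<^sub>v v" using v B unfolding eigenvector_def by auto
    have "A *\<^sub>v v = (complex_of_real s * mu) \<cdot>\<^sub>v v"
    proof (rule eq_vecI)
      fix i assume i: "i < dim_vec ((complex_of_real s * mu) \<cdot>\<^sub>v v)"
      then have i': "i < n" using vc by auto
      have "(B *\<^sub>v v) $ i = complex_of_real (1 / s) * (A *\<^sub>v v) $ i"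
        using i' A vc(1) unfolding B_def by (simp add: scalar_prod_def sum_distrib_left ac_simps)
      then have "(A *\<^sub>v v) $ i = complex_of_real s * (B *\<^sub>v v) $ i" using sp by (simp add: field_simps)
      then show "(A *\<^sub>v v) $ i = ((complex_of_real s * mu) \<cdot>\<^sub>v v) $ i" using vc i' by simp
    qed (use A vc in auto)
    then have "eigenvector A v (complex_of_real s * mu)" using vc A unfolding eigenvector_def by auto
    then have "cmod (complex_of_real s * mu) \<in> norm ` spectrum A" unfolding spectrum_def eigenvalue_def by auto
    then have "cmod (complex_of_real s * mu) \<le> spectral_radius A" using spectral_radius_mem_max(2)[OF A n] by auto
    then have "s * cmod mu \<le> spectral_radius A" using sp by (simp add: norm_mult)
    then have "s * cmod mu < s * 1" using s by linarith
    then have "cmod mu < 1" using sp by (meson mult_less_cancel_left_pos)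
    then show ?thesis using mu sp by simp
  qed
  then obtain c where c: "\<And>k. norm_bound (B ^\<^sub>m k) c"
    using spectral_radius_jnf_norm_bound_less_1_upper_triangular[OF B] by auto
  have "cmod ((A ^\<^sub>m k) $$ (i, j)) \<le> c * s ^ k" if ij: "i < n" "j < n" for k i j
  proof -
    have "B ^\<^sub>m k = (complex_of_real (1 / s)) ^ k \<cdot>\<^sub>m (A ^\<^sub>m k)" unfolding B_def by (rule smult_pow_mat[OF A])
    then have "(B ^\<^sub>m k) $$ (i, j) = (complex_of_real (1 / s)) ^ k * (A ^\<^sub>m k) $$ (i, j)" using ij A by simp
    then have e: "(A ^\<^sub>m k) $$ (i, j) = complex_of_real (s ^ k) * (B ^\<^sub>m k) $$ (i, j)"
      using sp by (simp add: field_simps power_divide)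
    have "cmod ((B ^\<^sub>m k) $$ (i, j)) \<le> c" using c[of k] ij B unfolding norm_bound_def by auto
    moreover have "cmod (complex_of_real (s ^ k)) = s ^ k" using sp by (simp only: norm_of_real abs_of_pos zero_less_power)
    ultimately show ?thesis unfolding e norm_mult using sp
      by (metis mult.commute mult_left_mono zero_le_power less_imp_le)
  qed
  then show ?thesis by blast
qed


fun cnt :: "'v set \<Rightarrow> ('v \<Rightarrow> 'v \<Rightarrow> bool) \<Rightarrow> nat \<Rightarrow> 'v \<Rightarrow> 'v \<Rightarrow> nat" where
  "cnt V E 0 u v = (if u = v then 1 else 0)"
| "cnt V E (Suc k) u v = (\<Sum>w\<in>V. cnt V E k u w * (if E w v then 1 else 0))"

lemma walks_finite: "finite V \<Longrightarrow> finite (walks V E n)"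
proof -
  assume f: "finite V"
  have "walks V E n \<subseteq> {p. set p \<subseteq> V \<and> length p = n}" unfolding walks_def by auto
  then show ?thesis using finite_lists_length_eq[OF f] finite_subset by blast
qed

definition Wuv :: "'v set \<Rightarrow> ('v \<Rightarrow> 'v \<Rightarrow> bool) \<Rightarrow> nat \<Rightarrow> 'v \<Rightarrow> 'v \<Rightarrow> 'v list set" where
  "Wuv V E k u v = {p \<in> walks V E (Suc k). hd p = u \<and> last p = v}"

lemma Wuv_0: "u \<in> V \<Longrightarrow> Wuv V E 0 u v = (if u = v then {[u]} else {})"
proof -
  assume u: "u \<in> V"
  have "p \<in> Wuv V E 0 u v \<longleftrightarrow> p = [u] \<and> u = v" for p
  proof
    assume "p \<in> Wuv V E 0 u v"
    then have "length p = 1" "hd p = u" "last p = v" unfolding Wuv_def walks_def by auto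
    then show "p = [u] \<and> u = v" by (cases p) auto
  qed (use u in \<open>auto simp: Wuv_def walks_def\<close>)
  then show ?thesis by auto
qed

lemma Wuv_Suc: "v \<in> V \<Longrightarrow> Wuv V E (Suc k) u v = (\<Union>w\<in>{w\<in>V. E w v}. (\<lambda>q. q @ [v]) ` Wuv V E k u w)"
proof -
  assume v: "v \<in> V"
  show ?thesis
  proof
    show "Wuv V E (Suc k) u v \<subseteq> (\<Union>w\<in>{w\<in>V. E w v}. (\<lambda>q. q @ [v]) ` Wuv V E k u w)"
    proof
      fix p assume p: "p \<in> Wuv V E (Suc k) u v"
      then have pl: "length p = Suc (Suc k)" "set p \<subseteq> V" "successively E p" "hd p = u" "last p = v"
        unfolding Wuv_def walks_def by auto
      then have pne: "p \<noteq> []" by auto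
      define q where "q = butlast p"
      have pq: "p = q @ [v]" using append_butlast_last_id[OF pne] pl(5) q_def by simp
      have qne: "q \<noteq> []" using pl(1) q_def by (cases p) auto
      have q: "length q = Suc k" "set q \<subseteq> V" "successively E q" "E (last q) v" "hd q = u"
        using pl qne unfolding pq by (auto simp: successively_append_iff)
      then have "q \<in> Wuv V E k u (last q)" "last q \<in> V" unfolding Wuv_def walks_def using qne by auto
      then show "p \<in> (\<Union>w\<in>{w\<in>V. E w v}. (\<lambda>q. q @ [v]) ` Wuv V E k u w)" using pq q(4) by blast
    qed
  next
    show "(\<Union>w\<in>{w\<in>V. E w v}. (\<lambda>q. q @ [v]) ` Wuv V E k u w) \<subseteq> Wuv V E (Suc k) u v"
    proof
      fix p assume "p \<in> (\<Union>w\<in>{w\<in>V. E w v}. (\<lambda>q. q @ [v]) ` Wuv V E k u w)"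
      then obtain w q where w: "w \<in> V" "E w v" and q: "q \<in> Wuv V E k u w" and pq: "p = q @ [v]" by auto
      have ql: "length q = Suc k" "set q \<subseteq> V" "successively E q" "hd q = u" "last q = w"
        using q unfolding Wuv_def walks_def by auto
      then have "q \<noteq> []" by auto
      then show "p \<in> Wuv V E (Suc k) u v" unfolding Wuv_def walks_def pq
        using ql v w by (auto simp: successively_append_iff)
    qed
  qed
qed

lemma card_Wuv: "finite V \<Longrightarrow> u \<in> V \<Longrightarrow> v \<in> V \<Longrightarrow> card (Wuv V E k u v) = cnt V E k u v"
proof (induction k arbitrary: v)
  case 0 then show ?case using Wuv_0[OF 0(2), of E v] by simp
next
  case (Suc k)
  have fin: "finite (Wuv V E k u w)" for w
    unfolding Wuv_def using walks_finite[OF Suc.prems(1)] by auto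
  have "card (Wuv V E (Suc k) u v) = (\<Sum>w\<in>{w\<in>V. E w v}. card ((\<lambda>q. q @ [v]) ` Wuv V E k u w))"
    unfolding Wuv_Suc[OF Suc.prems(3)]
  proof (rule card_UN_disjoint)
    show "finite {w \<in> V. E w v}" using Suc.prems by auto
    show "\<forall>i\<in>{w \<in> V. E w v}. finite ((\<lambda>q. q @ [v]) ` Wuv V E k u i)" using fin by auto
    show "\<forall>i\<in>{w \<in> V. E w v}. \<forall>j\<in>{w \<in> V. E w v}. i \<noteq> j \<longrightarrow>
      (\<lambda>q. q @ [v]) ` Wuv V E k u i \<inter> (\<lambda>q. q @ [v]) ` Wuv V E k u j = {}"
      unfolding Wuv_def by auto
  qed
  also have "\<dots> = (\<Sum>w\<in>{w\<in>V. E w v}. cnt V E k u w)"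
  proof (rule sum.cong)
    fix w assume "w \<in> {w\<in>V. E w v}"
    then have "card ((\<lambda>q. q @ [v]) ` Wuv V E k u w) = card (Wuv V E k u w)"
      by (intro card_image) (auto intro: inj_onI)
    then show "card ((\<lambda>q. q @ [v]) ` Wuv V E k u w) = cnt V E k u w"
      using Suc.IH Suc.prems \<open>w \<in> {w\<in>V. E w v}\<close> by auto
  qed simp
  also have "\<dots> = cnt V E (Suc k) u v"
    using Suc.prems by (simp add: sum.inter_filter) (intro sum.cong refl, simp)
  finally show ?case .
qed

lemma card_walks_cnt: "finite V \<Longrightarrow> card (walks V E (Suc k)) = (\<Sum>u\<in>V. \<Sum>v\<in>V. cnt V E k u v)"
proof -
  assume f: "finite V"
  have eq: "walks V E (Suc k) = (\<Union>u\<in>V. \<Union>v\<in>V. Wuv V E k u v)"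
  proof
    show "walks V E (Suc k) \<subseteq> (\<Union>u\<in>V. \<Union>v\<in>V. Wuv V E k u v)"
    proof
      fix p assume p: "p \<in> walks V E (Suc k)"
      then have "p \<noteq> []" "set p \<subseteq> V" unfolding walks_def by auto
      then have "hd p \<in> V" "last p \<in> V" by auto
      then show "p \<in> (\<Union>u\<in>V. \<Union>v\<in>V. Wuv V E k u v)" using p unfolding Wuv_def by auto
    qed
  qed (auto simp: Wuv_def)
  have fin: "finite (Wuv V E k u v)" for u v
    unfolding Wuv_def using walks_finite[OF f] by auto
  have "card (walks V E (Suc k)) = (\<Sum>u\<in>V. card (\<Union>v\<in>V. Wuv V E k u v))"
    unfolding eq using f fin by (intro card_UN_disjoint) (auto simp: Wuv_def)
  also have "\<dots> = (\<Sum>u\<in>V. \<Sum>v\<in>V. card (Wuv V E k u v))"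
    using f fin by (intro sum.cong refl card_UN_disjoint) (auto simp: Wuv_def)
  also have "\<dots> = (\<Sum>u\<in>V. \<Sum>v\<in>V. cnt V E k u v)"
    using card_Wuv[OF f] by (intro sum.cong refl) auto
  finally show ?thesis .
qed

lemma enum_props: "finite V \<Longrightarrow> distinct (SOME vs. distinct vs \<and> set vs = V) \<and> set (SOME vs. distinct vs \<and> set vs = V) = V"
  by (rule someI_ex) (metis finite_distinct_list)

lemma sum_enum: "distinct vs \<Longrightarrow> sum f (set vs) = (\<Sum>l<length vs. f (vs ! l))"
proof -
  assume d: "distinct vs"
  have "set vs = (!) vs ` {..<length vs}" by (auto simp: in_set_conv_nth)
  moreover have "inj_on ((!) vs) {..<length vs}" using d by (simp add: inj_on_nth)
  ultimately show ?thesis by (simp add: sum.reindex)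
qed

lemma adj_mat_props:
  fixes V :: "'v set" and E :: "'v \<Rightarrow> 'v \<Rightarrow> bool"
  assumes f: "finite V"
  defines "A \<equiv> adjacency_mat V E"
  shows "A \<in> carrier_mat (card V) (card V)"
    "(\<Sum>i<card V. \<Sum>j<card V. cmod ((A ^\<^sub>m k) $$ (i, j))) = real (card (walks V E (Suc k)))"
proof -
  define vs where "vs = (SOME vs. distinct vs \<and> set vs = V)"
  have vs: "distinct vs" "set vs = V" using enum_props[OF f] vs_def by auto
  have len: "length vs = card V" using vs distinct_card by fastforce
  have Ad: "A = mat (card V) (card V) (\<lambda>(i, j). if E (vs ! i) (vs ! j) then 1 else 0)"
    unfolding A_def adjacency_mat_def Let_def vs_def[symmetric] len ..
  show Ac: "A \<in> carrier_mat (card V) (card V)" unfolding Ad by simp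
  have entry: "(A ^\<^sub>m k) $$ (i, j) = of_nat (cnt V E k (vs ! i) (vs ! j))" if "i < card V" "j < card V" for i j k
    using that
  proof (induction k arbitrary: j)
    case 0
    have "(vs ! i = vs ! j) \<longleftrightarrow> i = j" using vs(1) 0 len by (simp add: nth_eq_iff_index_eq)
    then show ?case using 0 Ac by auto
  next
    case (Suc k)
    have "(A ^\<^sub>m Suc k) $$ (i, j) = (\<Sum>l<card V. (A ^\<^sub>m k) $$ (i, l) * A $$ (l, j))"
      using Suc.prems Ac by (simp add: scalar_prod_def lessThan_atLeast0 ac_simps)
    also have "\<dots> = (\<Sum>l<card V. of_nat (cnt V E k (vs ! i) (vs ! l) * (if E (vs ! l) (vs ! j) then 1 else 0)))"
      using Suc.IH Suc.prems unfolding Ad by (intro sum.cong) auto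
    also have "\<dots> = of_nat (\<Sum>w\<in>V. cnt V E k (vs ! i) w * (if E w (vs ! j) then 1 else 0))"
      unfolding vs(2)[symmetric] sum_enum[OF vs(1)] len by simp
    finally show ?case by simp
  qed
  have "(\<Sum>i<card V. \<Sum>j<card V. cmod ((A ^\<^sub>m k) $$ (i, j))) = (\<Sum>i<card V. \<Sum>j<card V. real (cnt V E k (vs ! i) (vs ! j)))"
    using entry by (intro sum.cong refl) (simp del: of_nat_sum)
  also have "\<dots> = real (\<Sum>u\<in>V. \<Sum>v\<in>V. cnt V E k u v)"
    unfolding vs(2)[symmetric] sum_enum[OF vs(1)] len by simp
  finally show "(\<Sum>i<card V. \<Sum>j<card V. cmod ((A ^\<^sub>m k) $$ (i, j))) = real (card (walks V E (Suc k)))"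
    using card_walks_cnt[OF f] by simp
qed


definition ebound :: "(nat \<Rightarrow> real) \<Rightarrow> real \<Rightarrow> bool" where
  "ebound f s \<longleftrightarrow> (\<exists>C. \<forall>n\<ge>1. f n \<le> C * s ^ n)"

lemma ebound_mono: "ebound f s \<Longrightarrow> (\<And>n. 1 \<le> n \<Longrightarrow> g n \<le> f n) \<Longrightarrow> ebound g s"
  unfolding ebound_def by (meson order_trans)

lemma ebound_scale: "ebound f s \<Longrightarrow> 0 \<le> K \<Longrightarrow> ebound (\<lambda>n. K * f n) s"
  unfolding ebound_def
proof -
  assume "\<exists>C. \<forall>n\<ge>1. f n \<le> C * s ^ n" "0 \<le> K"
  then obtain C where "\<forall>n\<ge>1. f n \<le> C * s ^ n" by auto
  then have "\<forall>n\<ge>1. K * f n \<le> (K * C) * s ^ n" using \<open>0 \<le> K\<close> by (simp add: mult_left_mono mult.assoc)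
  then show "\<exists>C. \<forall>n\<ge>1. K * f n \<le> C * s ^ n" by blast
qed

lemma ebound_shift: "ebound f s \<Longrightarrow> 0 < s \<Longrightarrow> ebound (\<lambda>n. f (n + j)) s"
  unfolding ebound_def
proof -
  assume "\<exists>C. \<forall>n\<ge>1. f n \<le> C * s ^ n" "0 < s"
  then obtain C where C: "\<forall>n\<ge>1. f n \<le> C * s ^ n" by auto
  have "f (n + j) \<le> (C * s ^ j) * s ^ n" if "1 \<le> n" for n
  proof -
    have "f (n + j) \<le> C * s ^ (n + j)" using C that by auto
    then show ?thesis by (simp add: power_add ac_simps)
  qed
  then show "\<exists>C. \<forall>n\<ge>1. f (n + j) \<le> C * s ^ n" by blast
qed

lemma ebound_window:
  assumes e: "ebound f s" and s: "0 < s" and nn: "\<And>n. 0 \<le> f n"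
  shows "ebound (\<lambda>n. \<Sum>m\<in>{n..n + L}. f m) s"
proof -
  obtain C where C: "\<forall>n\<ge>1. f n \<le> C * s ^ n" using e ebound_def by auto
  define C' where "C' = max C 0"
  have C': "\<forall>n\<ge>1. f n \<le> C' * s ^ n" using C s unfolding C'_def
    by (meson max.cobounded1 mult_right_mono order_trans zero_le_power less_imp_le)
  define M where "M = max 1 s ^ L"
  have "(\<Sum>m\<in>{n..n + L}. f m) \<le> (real (Suc L) * C' * M) * s ^ n" if n: "1 \<le> n" for n
  proof -
    have "(\<Sum>m\<in>{n..n + L}. f m) \<le> (\<Sum>m\<in>{n..n + L}. C' * M * s ^ n)"
    proof (rule sum_mono)
      fix m assume m: "m \<in> {n..n + L}"
      then have "f m \<le> C' * s ^ m" using C' n by auto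
      also have "s ^ m = s ^ n * s ^ (m - n)" using m by (simp add: power_add[symmetric])
      also have "s ^ (m - n) \<le> M"
      proof -
        have "s ^ (m - n) \<le> max 1 s ^ (m - n)" using s by (intro power_mono) auto
        also have "\<dots> \<le> max 1 s ^ L" using m by (intro power_increasing) auto
        finally show ?thesis unfolding M_def .
      qed
      then have "C' * (s ^ n * s ^ (m - n)) \<le> C' * (s ^ n * M)"
        using s unfolding C'_def by (intro mult_left_mono) auto
      then have "C' * (s ^ n * s ^ (m - n)) \<le> C' * M * s ^ n" by (simp add: ac_simps)
      finally show "f m \<le> C' * M * s ^ n" .
    qed
    also have "\<dots> = real (Suc L) * C' * M * s ^ n" by simp
    finally show ?thesis by simp
  qed
  then show ?thesis unfolding ebound_def by blast
qed

lemma ebound_lower: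
  assumes e: "ebound f s" and s: "0 < s" and a: "0 \<le> a" and l: "\<And>n. 1 \<le> n \<Longrightarrow> a ^ n \<le> f n"
  shows "a \<le> s"
proof (rule ccontr)
  assume "\<not> a \<le> s"
  then have q: "1 < a / s" using s by simp
  obtain C where C: "\<forall>n\<ge>1. f n \<le> C * s ^ n" using e ebound_def by auto
  obtain n where n: "C < (a / s) ^ n" using real_arch_pow[OF q] by blast
  have "(a / s) ^ n \<le> (a / s) ^ Suc n" using q by (intro power_increasing) auto
  then have "C < (a / s) ^ Suc n" using n by linarith
  then have "C * s ^ Suc n < a ^ Suc n" using s by (simp add: power_divide field_simps)
  moreover have "a ^ Suc n \<le> C * s ^ Suc n"
  proof -
    have "a ^ Suc n \<le> f (Suc n)" using l[of "Suc n"] by simp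
    also have "f (Suc n) \<le> C * s ^ Suc n" using C le_add1 plus_1_eq_Suc by metis
    finally show ?thesis .
  qed
  ultimately show False by simp
qed


lemma dsr_lower: "finite V \<Longrightarrow> V \<noteq> {} \<Longrightarrow> digraph_spectral_radius V E ^ k \<le> real (card (walks V E (Suc k)))"
  unfolding digraph_spectral_radius_def
  using sr_lower[OF adj_mat_props(1)] adj_mat_props(2) by (metis card_gt_0_iff)

lemma dsr_nonneg: "finite V \<Longrightarrow> V \<noteq> {} \<Longrightarrow> 0 \<le> digraph_spectral_radius V E"
  unfolding digraph_spectral_radius_def
  using spectral_radius_mem_max(1)[OF adj_mat_props(1)] by (metis card_gt_0_iff imageE norm_ge_zero)

lemma dsr_upper:
  assumes f: "finite V" and ne: "V \<noteq> {}" and s: "digraph_spectral_radius V E < s"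
  shows "ebound (\<lambda>n. real (card (walks V E n))) s"
proof -
  let ?A = "adjacency_mat V E" and ?N = "card V"
  have sp: "0 < s" using dsr_nonneg[OF f ne, of E] s by linarith
  obtain C where C: "\<And>k i j. i < ?N \<Longrightarrow> j < ?N \<Longrightarrow> cmod ((?A ^\<^sub>m k) $$ (i, j)) \<le> C * s ^ k"
    using sr_upper[OF adj_mat_props(1)[OF f] s[unfolded digraph_spectral_radius_def]] by blast
  have "real (card (walks V E n)) \<le> (real ?N * real ?N * C / s) * s ^ n" if n: "1 \<le> n" for n
  proof -
    obtain k where k: "n = Suc k" using n by (cases n) auto
    have "real (card (walks V E n)) = (\<Sum>i<?N. \<Sum>j<?N. cmod ((?A ^\<^sub>m k) $$ (i, j)))"
      using adj_mat_props(2)[OF f] k by simp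
    also have "\<dots> \<le> (\<Sum>i<?N. \<Sum>j<?N. C * s ^ k)" using C by (intro sum_mono) auto
    also have "\<dots> = real ?N * real ?N * C * s ^ k" by simp
    also have "\<dots> = (real ?N * real ?N * C / s) * s ^ n" using k sp by simp
    finally show ?thesis .
  qed
  then show ?thesis unfolding ebound_def by blast
qed

context csys begin

lemma ADSC_fin: "finite (ADSC_nodes Sig I X delta)"
proof -
  have "ADSC_nodes Sig I X delta \<subseteq> X \<times> Pow Sig \<times> {..card Sig}"
    unfolding ADSC_nodes_def DSC_nodes_def using clique_sub card_clique_le by fastforce
  then show ?thesis by (rule finite_subset) (intro finite_cartesian_product finX finSig finite_Pow_iff[THEN iffD2] finite_atMost)
qed

lemma PN_sub: "PN \<subseteq> ADSC_nodes Sig I X delta" unfolding ADSC_pos_nodes_def by auto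

lemma PN_fin: "finite PN" using finite_subset[OF PN_sub ADSC_fin] .

lemma walks_sub: "walks PN PE n \<subseteq> walks (ADSC_nodes Sig I X delta) (ADSC_arc Sig I X delta) n"
  unfolding walks_def using PN_sub by (auto elim: successively_mono)

lemma count_le_T: "\<alpha> \<in> X \<Longrightarrow> \<beta> \<in> X \<Longrightarrow> count_traces Sig I delta \<alpha> \<beta> n \<le> T n"
proof -
  assume a: "\<alpha> \<in> X" "\<beta> \<in> X"
  have "count_traces Sig I delta \<alpha> \<beta> n \<le> (\<Sum>\<beta>\<in>X. count_traces Sig I delta \<alpha> \<beta> n)"
    using a finX by (intro member_le_sum) auto
  also have "\<dots> \<le> T n" unfolding T_def using a finX by (intro member_le_sum) auto
  finally show ?thesis .
qed

lemma PN_ne: "PN \<noteq> {}"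
proof
  assume e: "PN = {}"
  have "walks PN PE m = {}" if "1 \<le> m" for m
    using e that unfolding walks_def by (cases m) auto
  then have "(\<Sum>m\<in>{1..1 + LL}. card (walks PN PE m)) = 0" by auto
  then show False using walks_pos_bound[of 1] T_pos[of 1] by simp
qed

lemma AN_ne: "ADSC_nodes Sig I X delta \<noteq> {}" using PN_ne PN_sub by auto

theorem main_result:
  "digraph_spectral_radius PN PE = digraph_spectral_radius (ADSC_nodes Sig I X delta) (ADSC_arc Sig I X delta) \<and>
   char_root Sig I X delta = ereal (1 / digraph_spectral_radius (ADSC_nodes Sig I X delta) (ADSC_arc Sig I X delta)) \<and>
   0 < digraph_spectral_radius (ADSC_nodes Sig I X delta) (ADSC_arc Sig I X delta)"
proof -
  define \<rho> where "\<rho> = digraph_spectral_radius (ADSC_nodes Sig I X delta) (ADSC_arc Sig I X delta)"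
  define \<rho>p where "\<rho>p = digraph_spectral_radius PN PE"
  let ?AN = "ADSC_nodes Sig I X delta" and ?AE = "ADSC_arc Sig I X delta"
  let ?Wc = "\<lambda>n. real (card (walks ?AN ?AE n))" and ?Wp = "\<lambda>n. real (card (walks PN PE n))"
  let ?T = "\<lambda>n. real (T n)"
  define K where "K = real (card X * card X * card Qset)"
  have rnn: "0 \<le> \<rho>" "0 \<le> \<rho>p" unfolding \<rho>_def \<rho>p_def using dsr_nonneg ADSC_fin AN_ne PN_fin PN_ne by auto
  have C1: "?Wp n \<le> ?Wc n" for n using card_mono[OF walks_finite[OF ADSC_fin] walks_sub] by simp
  have C2: "?Wc n \<le> real (card Sig) * (\<Sum>m\<in>{n..n + 2 * card Sig}. ?T m)" if "1 \<le> n" for n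
    using walks_ADSC_bound[of n] that by (simp flip: of_nat_sum of_nat_mult)
  have C3: "?T n \<le> K * (\<Sum>m\<in>{n..n + LL}. ?Wp m)" if "1 \<le> n" for n
    using walks_pos_bound[of n] that unfolding K_def by (simp flip: of_nat_sum of_nat_mult)
  have Tb: "ebound ?T s" if s: "\<rho>p < s" for s
  proof -
    have sp: "0 < s" using rnn s by linarith
    have "ebound ?Wp s" using dsr_upper[OF PN_fin PN_ne] s unfolding \<rho>p_def by blast
    then have "ebound (\<lambda>n. \<Sum>m\<in>{n..n + LL}. ?Wp m) s" using sp by (intro ebound_window) auto
    then have "ebound (\<lambda>n. K * (\<Sum>m\<in>{n..n + LL}. ?Wp m)) s" by (rule ebound_scale) (simp add: K_def)
    then show ?thesis using C3 by (rule ebound_mono)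
  qed
  have le1: "\<rho> \<le> s" if s: "\<rho>p < s" for s
  proof -
    have sp: "0 < s" using rnn s by linarith
    have "ebound (\<lambda>n. \<Sum>m\<in>{n..n + 2 * card Sig}. ?T m) s" using Tb[OF s] sp by (intro ebound_window) auto
    then have "ebound (\<lambda>n. real (card Sig) * (\<Sum>m\<in>{n..n + 2 * card Sig}. ?T m)) s" by (rule ebound_scale) simp
    then have "ebound ?Wc s" using C2 by (rule ebound_mono)
    then have "ebound (\<lambda>n. ?Wc (n + 1)) s" using sp by (rule ebound_shift)
    then show "\<rho> \<le> s" using sp rnn(1) by (rule ebound_lower) (use dsr_lower[OF ADSC_fin AN_ne] \<rho>_def in simp)
  qed
  have le2: "\<rho>p \<le> s" if s: "\<rho> < s" for s
  proof -
    have sp: "0 < s" using rnn s by linarith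
    have "ebound ?Wc s" using dsr_upper[OF ADSC_fin AN_ne] s unfolding \<rho>_def by blast
    then have "ebound ?Wp s" using C1 by (rule ebound_mono)
    then have "ebound (\<lambda>n. ?Wp (n + 1)) s" using sp by (rule ebound_shift)
    then show "\<rho>p \<le> s" using sp rnn(2) by (rule ebound_lower) (use dsr_lower[OF PN_fin PN_ne] \<rho>p_def in simp)
  qed
  have eq: "\<rho>p = \<rho>"
  proof (rule antisym)
    show "\<rho> \<le> \<rho>p"
    proof (rule ccontr)
      assume a: "\<not> \<rho> \<le> \<rho>p"
      then have "\<rho>p < (\<rho> + \<rho>p) / 2" by (simp add: field_simps)
      from le1[OF this] show False using a by (simp add: field_simps)
    qed
    show "\<rho>p \<le> \<rho>"
    proof (rule ccontr)
      assume a: "\<not> \<rho>p \<le> \<rho>"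
      then have "\<rho> < (\<rho> + \<rho>p) / 2" by (simp add: field_simps)
      from le2[OF this] show False using a by (simp add: field_simps)
    qed
  qed
  have ge1: "1 \<le> \<rho>"
  proof (rule ccontr)
    assume "\<not> 1 \<le> \<rho>"
    then have s: "\<rho>p < (1 + \<rho>) / 2" using eq by (simp add: field_simps)
    have "1 \<le> (1 + \<rho>) / 2"
      by (rule ebound_lower[OF Tb[OF s], of 1]) (use rnn T_pos in auto)
    then show False using \<open>\<not> 1 \<le> \<rho>\<close> by (simp add: field_simps)
  qed
  then have rpos: "0 < \<rho>" by simp
  have rad_ge: "ereal (1 / \<rho>) \<le> conv_radius (\<lambda>n. real (count_traces Sig I delta \<alpha> \<beta> n))"
    if ab: "\<alpha> \<in> X" "\<beta> \<in> X" for \<alpha> \<beta>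
  proof (rule conv_radius_geI_ex')
    fix r :: real assume r: "0 < r" "ereal r < ereal (1 / \<rho>)"
    then have rr: "r < 1 / \<rho>" by simp
    define s where "s = (\<rho> + 1 / r) / 2"
    have s1: "\<rho> < s" "s < 1 / r" using rr r ge1 unfolding s_def by (auto simp: field_simps)
    have sr: "s * r < 1" "0 \<le> s * r" using s1 r rnn by (auto simp: field_simps)
    obtain C where C: "\<forall>n\<ge>1. ?T n \<le> C * s ^ n" using Tb[of s] s1 eq ebound_def by auto
    have "summable (\<lambda>n. C * (s * r) ^ n)" using sr by (intro summable_mult summable_geometric) auto
    then show "summable (\<lambda>n. real (count_traces Sig I delta \<alpha> \<beta> n) * of_real r ^ n)"
    proof (rule summable_comparison_test'[where N = 1])
      fix n :: nat assume n: "1 \<le> n"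
      have "real (count_traces Sig I delta \<alpha> \<beta> n) \<le> ?T n" using count_le_T[OF ab] by simp
      also have "\<dots> \<le> C * s ^ n" using C n by auto
      finally have "real (count_traces Sig I delta \<alpha> \<beta> n) * r ^ n \<le> C * s ^ n * r ^ n"
        using r by (intro mult_right_mono) auto
      then show "norm (real (count_traces Sig I delta \<alpha> \<beta> n) * of_real r ^ n) \<le> C * (s * r) ^ n"
        using r by (simp add: power_mult_distrib ac_simps)
    qed
  qed
  have nsum: "\<exists>\<alpha>\<in>X. \<exists>\<beta>\<in>X. \<not> summable (\<lambda>n. real (count_traces Sig I delta \<alpha> \<beta> n) * r ^ n)"
    if r: "1 / \<rho> < r" for r :: real
  proof (rule ccontr)
    assume "\<not> ?thesis"
    then have sm: "\<And>\<alpha> \<beta>. \<alpha> \<in> X \<Longrightarrow> \<beta> \<in> X \<Longrightarrow> summable (\<lambda>n. real (count_traces Sig I delta \<alpha> \<beta> n) * r ^ n)"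
      by blast
    have "0 < 1 / \<rho>" using rpos by simp
    then have rp: "0 < r" using r by (rule less_trans)
    have rrho: "1 \<le> r * \<rho>" using r rpos by (simp add: field_simps)
    have "(\<lambda>n. \<Sum>\<alpha>\<in>X. \<Sum>\<beta>\<in>X. real (count_traces Sig I delta \<alpha> \<beta> n) * r ^ n) \<longlonglongrightarrow> 0"
      using sm by (intro tendsto_null_sum summable_LIMSEQ_zero) auto
    then have T0: "(\<lambda>n. ?T n * r ^ n) \<longlonglongrightarrow> 0"
      unfolding T_def by (simp add: sum_distrib_right)
    define L where "L = 2 * card Sig"
    have "(\<lambda>n. \<Sum>j\<in>{0..L}. ?T (n + (j + 1)) * r ^ (n + (j + 1))) \<longlonglongrightarrow> 0"
    proof (rule tendsto_null_sum)
      fix j show "(\<lambda>n. ?T (n + (j + 1)) * r ^ (n + (j + 1))) \<longlonglongrightarrow> 0"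
        by (rule LIMSEQ_ignore_initial_segment[OF T0])
    qed
    moreover have "(\<Sum>j\<in>{0..L}. ?T (n + (j + 1)) * r ^ (n + (j + 1))) = (\<Sum>m\<in>{n + 1..n + 1 + L}. ?T m * r ^ m)" for n
      using sum.shift_bounds_cl_nat_ivl[of "\<lambda>m. ?T m * r ^ m" 0 "n + 1" L] by (simp add: ac_simps)
    ultimately have h0: "(\<lambda>n. \<Sum>m\<in>{n + 1..n + 1 + L}. ?T m * r ^ m) \<longlonglongrightarrow> 0" by simp
    define c0 where "c0 = min 1 r ^ L"
    have c0: "0 < c0" unfolding c0_def using rp by simp
    have Sp: "0 < real (card Sig)" using irr_monoid(1) finSig by (simp add: card_gt_0_iff)
    define \<delta> where "\<delta> = c0 * r / real (card Sig)"
    have dp: "0 < \<delta>" unfolding \<delta>_def using c0 rp Sp by simp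
    have low: "\<delta> \<le> (\<Sum>m\<in>{n + 1..n + 1 + L}. ?T m * r ^ m)" for n
    proof -
      have "\<rho> ^ n \<le> ?Wc (n + 1)" using dsr_lower[OF ADSC_fin AN_ne] \<rho>_def by simp
      also have "\<dots> \<le> real (card Sig) * (\<Sum>m\<in>{n + 1..n + 1 + L}. ?T m)" using C2[of "n + 1"] L_def by simp
      finally have a1: "\<rho> ^ n / real (card Sig) \<le> (\<Sum>m\<in>{n + 1..n + 1 + L}. ?T m)"
        using Sp by (simp add: field_simps)
      have a2: "c0 * r ^ (n + 1) \<le> r ^ m" if m: "m \<in> {n + 1..n + 1 + L}" for m
      proof -
        have "m = (n + 1) + (m - (n + 1))" using m by simp
        then have "r ^ m = r ^ (n + 1) * r ^ (m - (n + 1))" by (metis power_add)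
        moreover have "min 1 r ^ L \<le> r ^ (m - (n + 1))"
        proof -
          have "min 1 r ^ L \<le> min 1 r ^ (m - (n + 1))" using m rp by (intro power_decreasing) auto
          also have "\<dots> \<le> r ^ (m - (n + 1))" using rp by (intro power_mono) auto
          finally show ?thesis .
        qed
        ultimately show ?thesis unfolding c0_def using rp by (simp add: mult_left_mono ac_simps)
      qed
      have "c0 * r ^ (n + 1) * (\<rho> ^ n / real (card Sig)) \<le> c0 * r ^ (n + 1) * (\<Sum>m\<in>{n + 1..n + 1 + L}. ?T m)"
        using a1 c0 rp by (intro mult_left_mono) auto
      also have "\<dots> = (\<Sum>m\<in>{n + 1..n + 1 + L}. ?T m * (c0 * r ^ (n + 1)))"
        unfolding sum_distrib_left by (intro sum.cong refl) (simp only: ac_simps)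
      also have "\<dots> \<le> (\<Sum>m\<in>{n + 1..n + 1 + L}. ?T m * r ^ m)"
        using a2 by (intro sum_mono mult_left_mono) auto
      finally have a3: "c0 * r ^ (n + 1) * (\<rho> ^ n / real (card Sig)) \<le> (\<Sum>m\<in>{n + 1..n + 1 + L}. ?T m * r ^ m)" .
      have "c0 * r ^ (n + 1) * (\<rho> ^ n / real (card Sig)) = \<delta> * (r * \<rho>) ^ n"
        unfolding \<delta>_def by (simp add: power_mult_distrib field_simps)
      moreover have "\<delta> \<le> \<delta> * (r * \<rho>) ^ n" using dp rrho by (simp add: one_le_power)
      ultimately show ?thesis using a3 by linarith
    qed
    have "eventually (\<lambda>n. \<bar>\<Sum>m\<in>{n + 1..n + 1 + L}. ?T m * r ^ m\<bar> < \<delta>) sequentially"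
      using h0 dp by (metis (mono_tags, lifting) LIMSEQ_D diff_zero eventually_sequentially real_norm_def)
    then obtain n where "\<bar>\<Sum>m\<in>{n + 1..n + 1 + L}. ?T m * r ^ m\<bar> < \<delta>" by (meson eventually_sequentially order_refl)
    then show False using low[of n] by linarith
  qed
  let ?R = "(\<lambda>(\<alpha>, \<beta>). conv_radius (\<lambda>n. real (count_traces Sig I delta \<alpha> \<beta> n))) ` (X \<times> X)"
  have Rfin: "finite ?R" "?R \<noteq> {}" using finX X_ne by auto
  have "ereal (1 / \<rho>) \<le> Min ?R" using Rfin rad_ge by (subst Min_ge_iff) auto
  moreover have "Min ?R \<le> ereal (1 / \<rho>)"
  proof (rule ccontr)
    assume "\<not> Min ?R \<le> ereal (1 / \<rho>)"
    then have "ereal (1 / \<rho>) < Min ?R" by (simp add: not_le)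
    from ereal_dense2[OF this] obtain r where r: "ereal (1 / \<rho>) < ereal r" "ereal r < Min ?R" by blast
    then have r1: "1 / \<rho> < r" by simp
    from nsum[OF this] obtain \<alpha> \<beta> where ab: "\<alpha> \<in> X" "\<beta> \<in> X" "\<not> summable (\<lambda>n. real (count_traces Sig I delta \<alpha> \<beta> n) * r ^ n)"
      by blast
    have "0 < 1 / \<rho>" using rpos by simp
    then have rp: "0 < r" using r1 by (rule less_trans)
    have "conv_radius (\<lambda>n. real (count_traces Sig I delta \<alpha> \<beta> n)) \<le> ereal (norm r)"
      by (rule conv_radius_leI'[OF ab(3)])
    moreover have "Min ?R \<le> conv_radius (\<lambda>n. real (count_traces Sig I delta \<alpha> \<beta> n))"
      using Rfin ab by (intro Min_le) auto
    ultimately show False using r rp by simp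
  qed
  ultimately have "char_root Sig I X delta = ereal (1 / \<rho>)" unfolding char_root_def by simp
  then show ?thesis using eq rpos unfolding \<rho>_def \<rho>p_def by simp
qed

end


theorem corollary1:
  fixes Sig :: "'a set" and I :: "('a \<times> 'a) set"
    and X :: "'x set" and delta :: "'x \<Rightarrow> 'a \<Rightarrow> 'x option"
  assumes "concurrent_system Sig I X delta"
    and "non_trivial Sig X delta"
    and "irreducible_system Sig I X delta"
  shows "ereal (digraph_spectral_radius (ADSC_pos_nodes Sig I X delta)
                  (\<lambda>u v. ADSC_arc Sig I X delta u v \<and>
                         u \<in> ADSC_pos_nodes Sig I X delta \<and> v \<in> ADSC_pos_nodes Sig I X delta))
           = inverse (char_root Sig I X delta)
    \<and> digraph_spectral_radius (ADSC_pos_nodes Sig I X delta)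
                  (\<lambda>u v. ADSC_arc Sig I X delta u v \<and>
                         u \<in> ADSC_pos_nodes Sig I X delta \<and> v \<in> ADSC_pos_nodes Sig I X delta)
      = digraph_spectral_radius (ADSC_nodes Sig I X delta) (ADSC_arc Sig I X delta)"
proof -
  have tmI: "trace_monoid Sig I" using assms(1) unfolding concurrent_system_def by auto
  interpret csys Sig I X delta
    using assms tmI by (unfold_locales) auto
  have m: "digraph_spectral_radius (ADSC_pos_nodes Sig I X delta)
                  (\<lambda>u v. ADSC_arc Sig I X delta u v \<and>
                         u \<in> ADSC_pos_nodes Sig I X delta \<and> v \<in> ADSC_pos_nodes Sig I X delta)
       = digraph_spectral_radius (ADSC_nodes Sig I X delta) (ADSC_arc Sig I X delta) \<and>
   char_root Sig I X delta = ereal (1 / digraph_spectral_radius (ADSC_nodes Sig I X delta) (ADSC_arc Sig I X delta)) \<and>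
   0 < digraph_spectral_radius (ADSC_nodes Sig I X delta) (ADSC_arc Sig I X delta)"
    by (rule main_result)
  then show ?thesis by simp
qed


end
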